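(* Let $Q\subset\mathbb{R}^d$ be compact, $T>0$, and let $H:([0,T]\times Q)^2\to\mathbb{R}$ satisfy, for constants $\beta\ge1$, $\alpha,\gamma,c,C>0$, $$|H(t,x;s,y)|\le C(t-s)^{-\alpha}\exp\Big(-c\frac{|x-y|^\beta}{(t-s)^\gamma}\Big)\quad(0\le s<t\le T,\ x,y\in Q).$$ For $v\in L^\lambda([0,T],L^\rho(Q))$ and $0\le t_0\le t\le T$, $x\in Q$, set $J(v)(t_0,t,x)=\int_{t_0}^t\int_Q H(t,x;s,y)v(s,y)\,dy\,ds$. Fix $\rho\in[1,+\infty]$, $q\in[\rho,+\infty]$ and define $r$ by $\frac1r=\frac1q-\frac1\rho+1$. Then there is $C>0$ such that for $0\le t_0\le t\le T$, $$\|J(v)(t_0,t,\cdot)\|_{L^q(Q)}\le C\int_{t_0}^t(t-s)^{-\alpha+\frac{\gamma d}{\beta r}}\|v(s,\cdot)\|_{L^\rho(Q)}\,ds.$$ Consequently, given $\lambda\in[1,+\infty]$, if $\alpha+\frac1\lambda<\frac{\gamma d}{\beta r}+1$, then $v\mapsto J(v)(0,\cdot,\cdot)$ is a bounded operator from $L^\lambda([0,T],L^\rho(Q))$ into $L^\infty([0,T],L^q(Q))$. *)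

theory Defs
  imports "HOL-Analysis.Analysis"
begin

definition enn_powr :: "ennreal \<Rightarrow> real \<Rightarrow> ennreal" where
  "enn_powr x a = (if x = \<infinity> then \<infinity> else ennreal (enn2real x powr a))"

definition Lp_norm :: "'a measure \<Rightarrow> ennreal \<Rightarrow> ('a \<Rightarrow> ennreal) \<Rightarrow> ennreal" where
  "Lp_norm M p f =
     (if p = \<infinity> then Inf {C. AE x in M. f x \<le> C}
      else enn_powr (\<integral>\<^sup>+ x. enn_powr (f x) (enn2real p) \<partial>M) (1 / enn2real p))"

definition recip :: "ennreal \<Rightarrow> real" where
  "recip p = enn2real (inverse p)"

definition Jop :: "('a::euclidean_space) set \<Rightarrow> (real \<Rightarrow> 'a \<Rightarrow> real \<Rightarrow> 'a \<Rightarrow> real)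
                    \<Rightarrow> (real \<Rightarrow> 'a \<Rightarrow> real) \<Rightarrow> real \<Rightarrow> real \<Rightarrow> 'a \<Rightarrow> real" where
  "Jop Q H v t0 t x =
     (LINT s:{t0..t}|lborel. (LINT y:Q|lborel. H t x s y * v s y))"

end

theory Submission
  imports Defs "HOL-Probability.Distributions"
begin

lemma enn_powr_ennreal: "0 \<le> x \<Longrightarrow> enn_powr (ennreal x) a = ennreal (x powr a)"
  by (simp add: enn_powr_def)

lemma enn_powr_top[simp]: "enn_powr \<infinity> a = \<infinity>"
  by (simp add: enn_powr_def)

lemma enn_powr_0[simp]: "enn_powr 0 a = 0"
  by (simp add: enn_powr_def)

lemma enn_powr_1[simp]: "enn_powr x 1 = x"
  by (cases x) (auto simp: enn_powr_def)

lemma enn_powr_eq_0_iff: "enn_powr x a = 0 \<longleftrightarrow> x = 0"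
  by (cases x) (auto simp: enn_powr_def)

lemma enn_powr_mono: "x \<le> y \<Longrightarrow> 0 \<le> a \<Longrightarrow> enn_powr x a \<le> enn_powr y a"
proof (cases x; cases y)
  fix r s assume *: "x \<le> y" "0 \<le> a" "x = ennreal r" "0 \<le> r" "y = ennreal s" "0 \<le> s"
  then have "r \<le> s" by simp
  then show ?thesis using * by (auto simp: enn_powr_def intro!: ennreal_leI powr_mono2)
qed (auto simp: enn_powr_def top_unique)

lemma enn_powr_mult: "0 < a \<Longrightarrow> enn_powr (x * y) a = enn_powr x a * enn_powr y a"
proof (cases x; cases y)
  fix r s assume *: "0 < a" "x = ennreal r" "0 \<le> r" "y = ennreal s" "0 \<le> s"
  then show ?thesis by (simp add: enn_powr_def flip: ennreal_mult) (simp add: powr_mult ennreal_mult)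
qed (auto simp: enn_powr_def ennreal_mult_top ennreal_top_mult ennreal_mult_eq_top_iff)

lemma enn_powr_powr: "0 < a \<Longrightarrow> 0 < b \<Longrightarrow> enn_powr (enn_powr x a) b = enn_powr x (a * b)"
  by (cases x) (auto simp: enn_powr_def powr_powr)

lemma enn_powr_add: "0 < a \<Longrightarrow> 0 < b \<Longrightarrow> enn_powr x a * enn_powr x b = enn_powr x (a + b)"
  by (cases x) (auto simp: enn_powr_def powr_add ennreal_mult'' ennreal_mult)

lemma enn_powr_less_top: "x < \<infinity> \<Longrightarrow> enn_powr x a < \<infinity>"
  by (simp add: enn_powr_def)

lemma measurable_enn_powr[measurable]:
  assumes [measurable]: "f \<in> borel_measurable M"
  shows "(\<lambda>x. enn_powr (f x) a) \<in> borel_measurable M"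
  unfolding enn_powr_def by measurable

definition ep :: "ennreal \<Rightarrow> real \<Rightarrow> ennreal" where
  "ep x a = (if a = 0 then 1 else enn_powr x a)"

lemma measurable_ep[measurable]:
  assumes [measurable]: "f \<in> borel_measurable M"
  shows "(\<lambda>x. ep (f x) a) \<in> borel_measurable M"
  unfolding ep_def by measurable

lemma amgm_enn:
  fixes a b \<theta> :: real
  assumes "0 < \<theta>" "\<theta> < 1" "0 < a" "0 < b"
  shows "enn_powr x \<theta> * enn_powr y (1 - \<theta>)
     \<le> ennreal (a powr \<theta> * b powr (1 - \<theta>)) * (ennreal (\<theta> / a) * x + ennreal ((1 - \<theta>) / b) * y)"
proof (cases "x = \<infinity> \<or> y = \<infinity>")
  case True
  have pos: "ennreal (a powr \<theta> * b powr (1 - \<theta>)) \<noteq> 0" "ennreal (\<theta> / a) \<noteq> 0" "ennreal ((1 - \<theta>) / b) \<noteq> 0"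
    using assms by auto
  show ?thesis
  proof (cases "x = 0 \<or> y = 0")
    case True then show ?thesis using assms by (auto simp: enn_powr_eq_0_iff)
  next
    case False
    have inf: "ennreal (\<theta> / a) * x + ennreal ((1 - \<theta>) / b) * y = top"
      using True pos False by (auto simp: ennreal_mult_eq_top_iff)
    then have tt: "ennreal (a powr \<theta> * b powr (1 - \<theta>)) * (ennreal (\<theta> / a) * x + ennreal ((1 - \<theta>) / b) * y) = top"
      using pos(1) by (simp only: inf ennreal_mult_top if_False)
    show ?thesis by (subst tt) (rule top_greatest)
  qed
next
  case False
  obtain r where r: "x = ennreal r" "0 \<le> r" using False by (cases x) auto
  obtain s where s: "y = ennreal s" "0 \<le> s" using False by (cases y) auto
  note rs = r s
  have real: "r powr \<theta> * s powr (1 - \<theta>) \<le> a powr \<theta> * b powr (1 - \<theta>) * (\<theta> / a * r + (1 - \<theta>) / b * s)"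
  proof (cases "r = 0 \<or> s = 0")
    case True
    then show ?thesis using assms rs by (auto intro!: mult_nonneg_nonneg add_nonneg_nonneg)
  next
    case False
    then have rp: "r > 0" "s > 0" using rs by auto
    have "(r / a) powr \<theta> * (s / b) powr (1 - \<theta>) \<le> \<theta> * (r / a) + (1 - \<theta>) * (s / b)"
      using Youngs_inequality_0[of \<theta> "1 - \<theta>" "r / a" "s / b"] assms rp by auto
    then have "a powr \<theta> * b powr (1 - \<theta>) * ((r / a) powr \<theta> * (s / b) powr (1 - \<theta>))
        \<le> a powr \<theta> * b powr (1 - \<theta>) * (\<theta> * (r / a) + (1 - \<theta>) * (s / b))"
      by (intro mult_left_mono) auto
    moreover have "a powr \<theta> * b powr (1 - \<theta>) * ((r / a) powr \<theta> * (s / b) powr (1 - \<theta>)) = r powr \<theta> * s powr (1 - \<theta>)"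
      using assms rp by (simp add: powr_divide)
    ultimately show ?thesis by simp
  qed
  have "enn_powr x \<theta> * enn_powr y (1 - \<theta>) = ennreal (r powr \<theta> * s powr (1 - \<theta>))"
    using rs by (simp add: enn_powr_ennreal ennreal_mult)
  also have "\<dots> \<le> ennreal (a powr \<theta> * b powr (1 - \<theta>) * (\<theta> / a * r + (1 - \<theta>) / b * s))"
    using real by (rule ennreal_leI)
  also have "\<dots> = ennreal (a powr \<theta> * b powr (1 - \<theta>)) * (ennreal (\<theta> / a) * x + ennreal ((1 - \<theta>) / b) * y)"
  proof -
    have "ennreal (\<theta> / a * r + (1 - \<theta>) / b * s) = ennreal (\<theta> / a) * x + ennreal ((1 - \<theta>) / b) * y"
    proof -
      have "ennreal (\<theta> / a * r + (1 - \<theta>) / b * s) = ennreal (\<theta> / a * r) + ennreal ((1 - \<theta>) / b * s)"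
        using rs assms by (intro ennreal_plus) auto
      also have "ennreal (\<theta> / a * r) = ennreal (\<theta> / a) * x"
        unfolding rs using rs assms by (intro ennreal_mult) auto
      also have "ennreal ((1 - \<theta>) / b * s) = ennreal ((1 - \<theta>) / b) * y"
        unfolding rs using rs assms by (intro ennreal_mult) auto
      finally show ?thesis .
    qed
    moreover have "ennreal (a powr \<theta> * b powr (1 - \<theta>) * (\<theta> / a * r + (1 - \<theta>) / b * s))
       = ennreal (a powr \<theta> * b powr (1 - \<theta>)) * ennreal (\<theta> / a * r + (1 - \<theta>) / b * s)"
      using rs assms by (intro ennreal_mult) auto
    ultimately show ?thesis by (simp only:)
  qed
  finally show ?thesis .
qed

lemma enn_powr_one_base[simp]: "enn_powr 1 b = 1" by (simp add: enn_powr_def)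
lemma enn_powr_top'[simp]: "enn_powr top a = top" by (simp add: enn_powr_def)

lemma ep_0[simp]: "ep x 0 = 1" by (simp add: ep_def)
lemma ep_1[simp]: "ep x 1 = x" by (simp add: ep_def)
lemma ep_pos: "0 < a \<Longrightarrow> ep x a = enn_powr x a" by (simp add: ep_def)
lemma ep_mono: "x \<le> y \<Longrightarrow> 0 \<le> a \<Longrightarrow> ep x a \<le> ep y a"
  by (simp add: ep_def enn_powr_mono)
lemma ep_one_base[simp]: "ep 1 a = 1"
  by (simp add: ep_def enn_powr_def)
lemma ep_mult: "0 \<le> a \<Longrightarrow> ep (x * y) a = ep x a * ep y a"
  by (cases "a = 0") (auto simp: ep_def enn_powr_mult)
lemma ep_ep: "0 \<le> a \<Longrightarrow> 0 \<le> b \<Longrightarrow> ep (ep x a) b = ep x (a * b)"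
  by (cases "a = 0"; cases "b = 0") (auto simp: ep_def enn_powr_powr)
lemma ep_add: "0 \<le> a \<Longrightarrow> 0 \<le> b \<Longrightarrow> ep x a * ep x b = ep x (a + b)"
  by (cases "a = 0"; cases "b = 0") (auto simp: ep_def enn_powr_add)

lemma holder2:
  assumes [measurable]: "f \<in> borel_measurable M" "g \<in> borel_measurable M" and th: "0 < \<theta>" "\<theta> < 1"
  shows "(\<integral>\<^sup>+x. enn_powr (f x) \<theta> * enn_powr (g x) (1 - \<theta>) \<partial>M)
     \<le> enn_powr (\<integral>\<^sup>+x. f x \<partial>M) \<theta> * enn_powr (\<integral>\<^sup>+x. g x \<partial>M) (1 - \<theta>)"
proof -
  define A where "A = (\<integral>\<^sup>+x. f x \<partial>M)"
  define B where "B = (\<integral>\<^sup>+x. g x \<partial>M)"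
  show ?thesis
  proof (cases "A = 0 \<or> B = 0")
    case True
    then have "AE x in M. f x = 0 \<or> g x = 0"
    proof
      assume "A = 0" then have "AE x in M. f x = 0" unfolding A_def by (simp add: nn_integral_0_iff_AE)
      then show ?thesis by auto
    next
      assume "B = 0" then have "AE x in M. g x = 0" unfolding B_def by (simp add: nn_integral_0_iff_AE)
      then show ?thesis by auto
    qed
    then have "AE x in M. enn_powr (f x) \<theta> * enn_powr (g x) (1 - \<theta>) = 0"
      by eventually_elim auto
    then have "(\<integral>\<^sup>+x. enn_powr (f x) \<theta> * enn_powr (g x) (1 - \<theta>) \<partial>M) = 0"
      by (simp add: nn_integral_0_iff_AE)
    then show ?thesis by simp
  next
    case False
    then have A0: "A \<noteq> 0" and B0: "B \<noteq> 0" by auto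
    show ?thesis
    proof (cases "A = \<infinity> \<or> B = \<infinity>")
      case True
      have "enn_powr A \<theta> \<noteq> 0" "enn_powr B (1 - \<theta>) \<noteq> 0"
        using A0 B0 by (auto simp: enn_powr_eq_0_iff)
      moreover have "enn_powr A \<theta> = top \<or> enn_powr B (1 - \<theta>) = top"
        using True by auto
      ultimately have "enn_powr A \<theta> * enn_powr B (1 - \<theta>) = top"
        by (auto simp: ennreal_mult_eq_top_iff)
      then show ?thesis unfolding A_def B_def by simp
    next
      case False
      obtain a where a: "A = ennreal a" "0 < a" using False A0 by (cases A) auto
      obtain b where b: "B = ennreal b" "0 < b" using False B0 by (cases B) auto
      have "(\<integral>\<^sup>+x. enn_powr (f x) \<theta> * enn_powr (g x) (1 - \<theta>) \<partial>M)
         \<le> (\<integral>\<^sup>+x. ennreal (a powr \<theta> * b powr (1 - \<theta>)) * (ennreal (\<theta> / a) * f x + ennreal ((1 - \<theta>) / b) * g x) \<partial>M)"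
        by (intro nn_integral_mono amgm_enn) (use th a b in auto)
      also have "\<dots> = ennreal (a powr \<theta> * b powr (1 - \<theta>)) * (ennreal (\<theta> / a) * A + ennreal ((1 - \<theta>) / b) * B)"
        unfolding A_def B_def by (simp add: nn_integral_cmult nn_integral_add)
      also have "ennreal (\<theta> / a) * A + ennreal ((1 - \<theta>) / b) * B = ennreal 1"
      proof -
        have "ennreal (\<theta> / a) * A = ennreal (\<theta> / a * a)" unfolding a(1) by (rule ennreal_mult[symmetric]) (use a th in auto)
        also have "\<dots> = ennreal \<theta>" using a by simp
        finally have 1: "ennreal (\<theta> / a) * A = ennreal \<theta>" .
        have "ennreal ((1 - \<theta>) / b) * B = ennreal ((1 - \<theta>) / b * b)" unfolding b(1) by (rule ennreal_mult[symmetric]) (use b th in auto)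
        also have "\<dots> = ennreal (1 - \<theta>)" using b by simp
        finally have 2: "ennreal ((1 - \<theta>) / b) * B = ennreal (1 - \<theta>)" .
        show ?thesis unfolding 1 2 using th by (subst ennreal_plus[symmetric]) auto
      qed
      also have "ennreal (a powr \<theta> * b powr (1 - \<theta>)) * ennreal 1 = enn_powr A \<theta> * enn_powr B (1 - \<theta>)"
        using a b by (simp add: enn_powr_ennreal ennreal_mult)
      finally show ?thesis unfolding A_def B_def .
    qed
  qed
qed

lemma holder2_ep:
  assumes [measurable]: "f \<in> borel_measurable M" "g \<in> borel_measurable M" and th: "0 \<le> \<theta>" "\<theta> \<le> 1"
  shows "(\<integral>\<^sup>+x. ep (f x) \<theta> * ep (g x) (1 - \<theta>) \<partial>M)
     \<le> ep (\<integral>\<^sup>+x. f x \<partial>M) \<theta> * ep (\<integral>\<^sup>+x. g x \<partial>M) (1 - \<theta>)"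
proof -
  consider "\<theta> = 0" | "\<theta> = 1" | "0 < \<theta> \<and> \<theta> < 1" using th by linarith
  then show ?thesis
  proof cases
    case 3 then show ?thesis using holder2[of f M g \<theta>] by (simp add: ep_def)
  qed simp_all
qed

lemma holder3:
  assumes [measurable]: "g1 \<in> borel_measurable M" "g2 \<in> borel_measurable M" "g3 \<in> borel_measurable M"
    and th: "0 \<le> \<theta>1" "0 \<le> \<theta>2" "0 \<le> \<theta>3" "\<theta>1 + \<theta>2 + \<theta>3 = 1"
  shows "(\<integral>\<^sup>+x. ep (g1 x) \<theta>1 * ep (g2 x) \<theta>2 * ep (g3 x) \<theta>3 \<partial>M)
     \<le> ep (\<integral>\<^sup>+x. g1 x \<partial>M) \<theta>1 * ep (\<integral>\<^sup>+x. g2 x \<partial>M) \<theta>2 * ep (\<integral>\<^sup>+x. g3 x \<partial>M) \<theta>3"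
proof (cases "\<theta>1 = 1")
  case True
  then have "\<theta>2 = 0" "\<theta>3 = 0" using th by auto
  then show ?thesis using True by simp
next
  case False
  define \<phi> where "\<phi> = 1 - \<theta>1"
  have \<phi>: "0 < \<phi>" "\<theta>1 = 1 - \<phi>" using th False by (auto simp: \<phi>_def)
  define a2 a3 where "a2 = \<theta>2 / \<phi>" and "a3 = \<theta>3 / \<phi>"
  have a: "0 \<le> a2" "a2 \<le> 1" "a3 = 1 - a2" "\<theta>2 = a2 * \<phi>" "\<theta>3 = a3 * \<phi>"
    using th \<phi> by (auto simp: a2_def a3_def field_simps)
  define h where "h x = ep (g2 x) a2 * ep (g3 x) a3" for x
  have hm[measurable]: "h \<in> borel_measurable M" unfolding h_def by measurable
  have eqh: "ep (h x) \<phi> = ep (g2 x) \<theta>2 * ep (g3 x) \<theta>3" for x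
    using a \<phi> by (simp add: h_def ep_mult ep_ep)
  have "(\<integral>\<^sup>+x. ep (g1 x) \<theta>1 * ep (g2 x) \<theta>2 * ep (g3 x) \<theta>3 \<partial>M)
      = (\<integral>\<^sup>+x. ep (g1 x) \<theta>1 * ep (h x) (1 - \<theta>1) \<partial>M)"
    by (simp add: eqh \<phi> mult.assoc)
  also have "\<dots> \<le> ep (\<integral>\<^sup>+x. g1 x \<partial>M) \<theta>1 * ep (\<integral>\<^sup>+x. h x \<partial>M) (1 - \<theta>1)"
    by (rule holder2_ep) (use th \<phi> in auto)
  also have "ep (\<integral>\<^sup>+x. h x \<partial>M) (1 - \<theta>1) \<le> ep (ep (\<integral>\<^sup>+x. g2 x \<partial>M) a2 * ep (\<integral>\<^sup>+x. g3 x \<partial>M) a3) \<phi>"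
    unfolding \<phi>(2) apply simp
    apply (rule ep_mono)
    unfolding h_def a(3) by (rule holder2_ep) (use a \<phi> in auto)
  also have "ep (ep (\<integral>\<^sup>+x. g2 x \<partial>M) a2 * ep (\<integral>\<^sup>+x. g3 x \<partial>M) a3) \<phi>
     = ep (\<integral>\<^sup>+x. g2 x \<partial>M) \<theta>2 * ep (\<integral>\<^sup>+x. g3 x \<partial>M) \<theta>3"
    using a \<phi> by (simp add: ep_mult ep_ep)
  finally show ?thesis by (simp add: mult.assoc mult_left_mono)
qed

lemma exp_abs_nn_integral_finite:
  fixes k :: real assumes k: "0 < k"
  shows "(\<integral>\<^sup>+x. ennreal (exp (- k * \<bar>x\<bar>)) \<partial>lborel) < \<infinity>"
proof -
  define f where "f x = ennreal (exp (- x)) * indicator {0..} x" for x :: real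
  have fm[measurable]: "f \<in> borel_measurable borel" unfolding f_def by measurable
  have f1: "(\<integral>\<^sup>+x. f x \<partial>lborel) = 1"
    using nn_intergal_power_times_exp_Ici[of 0] by (simp add: f_def)
  have f2: "(\<integral>\<^sup>+x. f (- x) \<partial>lborel) = 1"
    using nn_integral_real_affine[OF fm, of "-1" 0] f1 by simp
  have "(\<integral>\<^sup>+x. ennreal (exp (- \<bar>x\<bar>)) \<partial>lborel) \<le> (\<integral>\<^sup>+x. f x + f (- x) \<partial>lborel)"
    by (intro nn_integral_mono) (auto simp: f_def indicator_def)
  also have "\<dots> = 2" by (simp add: nn_integral_add f1 f2)
  finally have le2: "(\<integral>\<^sup>+x. ennreal (exp (- \<bar>x\<bar>)) \<partial>lborel) \<le> 2" .
  have gm: "(\<lambda>x::real. ennreal (exp (- \<bar>x\<bar>))) \<in> borel_measurable borel" by measurable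
  have "(\<integral>\<^sup>+x. ennreal (exp (- \<bar>x\<bar>)) \<partial>lborel) = ennreal k * (\<integral>\<^sup>+x. ennreal (exp (- \<bar>0 + k * x\<bar>)) \<partial>lborel)"
    using nn_integral_real_affine[OF gm, of k 0] k by simp
  also have "(\<lambda>x. ennreal (exp (- \<bar>0 + k * x\<bar>))) = (\<lambda>x. ennreal (exp (- k * \<bar>x\<bar>)))"
    using k by (auto simp: abs_mult)
  finally have le: "ennreal k * (\<integral>\<^sup>+x. ennreal (exp (- k * \<bar>x\<bar>)) \<partial>lborel) \<le> 2"
    using le2 by simp
  show ?thesis
  proof (rule ccontr)
    assume "\<not> ?thesis"
    then have "(\<integral>\<^sup>+x. ennreal (exp (- k * \<bar>x\<bar>)) \<partial>lborel) = top" by (simp add: less_top[symmetric])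
    then have "ennreal k * (\<integral>\<^sup>+x. ennreal (exp (- k * \<bar>x\<bar>)) \<partial>lborel) = top"
      using k by (simp add: ennreal_mult_top)
    with le show False by (simp add: top_unique)
  qed
qed


lemma norm_powr_ge: fixes \<beta> :: real assumes "1 \<le> \<beta>" shows "norm w - 1 \<le> norm w powr \<beta>"
proof (cases "norm w \<ge> 1")
  case True
  then have "norm w powr 1 \<le> norm w powr \<beta>" using assms by (intro powr_mono) auto
  then show ?thesis using True by simp
next
  case False then show ?thesis by (smt (verit) powr_ge_zero)
qed

lemma Iexp_finite:
  fixes a \<beta> :: real assumes a: "0 < a" and \<beta>: "1 \<le> \<beta>"
  shows "(\<integral>\<^sup>+w. ennreal (exp (- a * norm (w::'a::euclidean_space) powr \<beta>)) \<partial>lborel) < \<infinity>"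
proof -
  define d where "d = real DIM('a)"
  have d: "0 < d" unfolding d_def by simp
  define k where "k = a / d"
  have k: "0 < k" using a d by (simp add: k_def)
  have pw: "ennreal (exp (- a * norm w powr \<beta>)) \<le> ennreal (exp a) * (\<Prod>b\<in>Basis. ennreal (exp (- k * \<bar>w \<bullet> b\<bar>)))" for w :: 'a
  proof -
    have s: "(\<Sum>b\<in>Basis. \<bar>w \<bullet> b\<bar>) \<le> d * norm w"
      using sum_bounded_above[of "Basis::'a set" "\<lambda>b. \<bar>w \<bullet> b\<bar>" "norm w"] Basis_le_norm[of _ w]
      by (simp add: d_def)
    have "- a * norm w powr \<beta> \<le> a - k * (\<Sum>b\<in>Basis. \<bar>w \<bullet> b\<bar>)"
    proof -
      have "k * (\<Sum>b\<in>Basis. \<bar>w \<bullet> b\<bar>) \<le> k * (d * norm w)" using s k by (intro mult_left_mono) auto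
      also have "\<dots> = a * norm w" using d by (simp add: k_def)
      finally have 1: "k * (\<Sum>b\<in>Basis. \<bar>w \<bullet> b\<bar>) \<le> a * norm w" .
      have "a * (norm w - 1) \<le> a * norm w powr \<beta>" using norm_powr_ge[OF \<beta>, of w] a by (intro mult_left_mono) auto
      then show ?thesis using 1 by (simp add: algebra_simps)
    qed
    then have "exp (- a * norm w powr \<beta>) \<le> exp (a - k * (\<Sum>b\<in>Basis. \<bar>w \<bullet> b\<bar>))" by simp
    also have "\<dots> = exp a * (\<Prod>b\<in>Basis. exp (- k * \<bar>w \<bullet> b\<bar>))"
    proof -
      have "a - k * (\<Sum>b\<in>Basis. \<bar>w \<bullet> b\<bar>) = a + (\<Sum>b\<in>Basis. - k * \<bar>w \<bullet> b\<bar>)"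
        by (simp add: sum_distrib_left sum_negf)
      then show ?thesis by (simp only: exp_add exp_sum[OF finite_Basis])
    qed
    finally have "ennreal (exp (- a * norm w powr \<beta>)) \<le> ennreal (exp a * (\<Prod>b\<in>Basis. exp (- k * \<bar>w \<bullet> b\<bar>)))"
      by (rule ennreal_leI)
    also have "ennreal (exp a * (\<Prod>b\<in>Basis. exp (- k * \<bar>w \<bullet> b\<bar>))) = ennreal (exp a) * ennreal (\<Prod>b\<in>Basis. exp (- k * \<bar>w \<bullet> b\<bar>))"
      by (rule ennreal_mult) (auto intro: prod_nonneg)
    also have "ennreal (\<Prod>b\<in>Basis. exp (- k * \<bar>w \<bullet> b\<bar>)) = (\<Prod>b\<in>Basis. ennreal (exp (- k * \<bar>w \<bullet> b\<bar>)))"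
      by (rule prod_ennreal[symmetric]) auto
    finally show ?thesis .
  qed
  have "(\<integral>\<^sup>+w. ennreal (exp (- a * norm (w::'a) powr \<beta>)) \<partial>lborel)
     \<le> (\<integral>\<^sup>+w. ennreal (exp a) * (\<Prod>b\<in>Basis. ennreal (exp (- k * \<bar>(w::'a) \<bullet> b\<bar>))) \<partial>lborel)"
    by (rule nn_integral_mono) (rule pw)
  also have "\<dots> = ennreal (exp a) * (\<integral>\<^sup>+w. (\<Prod>b\<in>Basis. ennreal (exp (- k * \<bar>(w::'a) \<bullet> b\<bar>))) \<partial>lborel)"
    by (intro nn_integral_cmult) measurable
  also have "(\<integral>\<^sup>+w. (\<Prod>b\<in>Basis. ennreal (exp (- k * \<bar>(w::'a) \<bullet> b\<bar>))) \<partial>lborel)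
      = (\<Prod>b\<in>(Basis::'a set). (\<integral>\<^sup>+x. ennreal (exp (- k * \<bar>x\<bar>)) \<partial>lborel))"
    by (rule nn_integral_lborel_prod[where f="\<lambda>b x. ennreal (exp (- k * \<bar>x\<bar>))"]) auto
  also have "ennreal (exp a) * \<dots> < \<infinity>"
  proof -
    have "(\<Prod>b\<in>(Basis::'a set). (\<integral>\<^sup>+x. ennreal (exp (- k * \<bar>x\<bar>)) \<partial>lborel)) \<noteq> top"
      using exp_abs_nn_integral_finite[OF k] by (simp add: power_eq_top_ennreal_iff)
    then show ?thesis by (simp add: ennreal_mult_eq_top_iff less_top[symmetric])
  qed
  finally show ?thesis .
qed


lemma kernel_scaling:
  fixes u :: "'a::euclidean_space" and a \<tau> \<beta> \<gamma> :: real
  assumes a: "0 < a" and \<tau>: "0 < \<tau>" and \<beta>: "0 < \<beta>" and \<gamma>: "0 < \<gamma>"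
  shows "(\<integral>\<^sup>+y. ennreal (exp (- a * norm (u - y) powr \<beta> / \<tau> powr \<gamma>)) \<partial>lborel)
       = ennreal (\<tau> powr (\<gamma> * real DIM('a) / \<beta>)) * (\<integral>\<^sup>+w. ennreal (exp (- a * norm (w::'a) powr \<beta>)) \<partial>lborel)"
proof -
  define \<sigma> where "\<sigma> = \<tau> powr (\<gamma> / \<beta>)"
  have \<sigma>: "0 < \<sigma>" using \<tau> by (simp add: \<sigma>_def)
  have \<sigma>\<beta>: "\<sigma> powr \<beta> = \<tau> powr \<gamma>" using \<tau> \<beta> by (simp add: \<sigma>_def powr_powr)
  define h where "h y = ennreal (exp (- a * norm (u - y) powr \<beta> / \<tau> powr \<gamma>))" for y :: 'a
  have hm[measurable]: "h \<in> borel_measurable borel" unfolding h_def by measurable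
  have "(\<integral>\<^sup>+y. h y \<partial>lborel) = (\<integral>\<^sup>+y. h y \<partial>(density (distr lborel borel (\<lambda>x. u + (- \<sigma>) *\<^sub>R x)) (\<lambda>x. ennreal (\<bar>- \<sigma>\<bar> ^ DIM('a)))))"
    using lborel_affine[of "- \<sigma>" u] \<sigma> by simp
  also have "\<dots> = (\<integral>\<^sup>+x. ennreal (\<bar>- \<sigma>\<bar> ^ DIM('a)) * h (u + (- \<sigma>) *\<^sub>R x) \<partial>lborel)"
    by (simp add: nn_integral_density nn_integral_distr)
  also have "\<dots> = (\<integral>\<^sup>+x. ennreal (\<tau> powr (\<gamma> * real DIM('a) / \<beta>)) * ennreal (exp (- a * norm (x::'a) powr \<beta>)) \<partial>lborel)"
  proof (rule nn_integral_cong)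
    fix x :: 'a
    have 1: "\<bar>- \<sigma>\<bar> ^ DIM('a) = \<tau> powr (\<gamma> * real DIM('a) / \<beta>)"
      using \<sigma> \<tau> by (simp add: \<sigma>_def powr_realpow[symmetric] powr_powr)
    have "norm (u - (u + (- \<sigma>) *\<^sub>R x)) powr \<beta> = \<sigma> powr \<beta> * norm x powr \<beta>"
      using \<sigma> by (simp add: powr_mult)
    then have 2: "h (u + (- \<sigma>) *\<^sub>R x) = ennreal (exp (- a * norm x powr \<beta>))"
      using \<tau> by (simp add: h_def \<sigma>\<beta>)
    show "ennreal (\<bar>- \<sigma>\<bar> ^ DIM('a)) * h (u + (- \<sigma>) *\<^sub>R x) = ennreal (\<tau> powr (\<gamma> * real DIM('a) / \<beta>)) * ennreal (exp (- a * norm x powr \<beta>))"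
      by (simp only: 1 2)
  qed
  also have "\<dots> = ennreal (\<tau> powr (\<gamma> * real DIM('a) / \<beta>)) * (\<integral>\<^sup>+w. ennreal (exp (- a * norm (w::'a) powr \<beta>)) \<partial>lborel)"
    by (rule nn_integral_cmult) measurable
  finally show ?thesis by (simp add: h_def)
qed

lemma recip_top[simp]: "recip top = 0" by (simp add: recip_def)
lemma recip_ennreal: "0 < p \<Longrightarrow> recip (ennreal p) = 1 / p"
  by (simp add: recip_def inverse_ennreal inverse_eq_divide)

lemma Lp_norm_top_le:
  assumes "AE x in M. f x \<le> N" shows "Lp_norm M top f \<le> N"
  unfolding Lp_norm_def using assms by (auto intro!: Inf_lower)

lemma AE_le_Lp_norm_top: "AE x in M. f x \<le> Lp_norm M top f"
proof -
  define L where "L = Lp_norm M top f"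
  have L: "L = Inf {C. AE x in M. f x \<le> C}" by (simp add: L_def Lp_norm_def)
  show ?thesis
  proof (cases "L = top")
    case True then show ?thesis unfolding L_def[symmetric] by simp
  next
    case False
    have "\<exists>C. (AE x in M. f x \<le> C) \<and> C < L + ennreal (1 / Suc n)" for n
    proof -
      have "L < L + ennreal (1 / Suc n)" using False
        by (simp add: ennreal_add_left_cancel_less less_top[symmetric])
      then show ?thesis unfolding L by (simp add: Inf_less_iff)
    qed
    then have "\<exists>C. \<forall>n. (AE x in M. f x \<le> C n) \<and> C n < L + ennreal (1 / Suc n)"
      by (subst choice_iff[symmetric]) blast
    then obtain C where C: "\<And>n. AE x in M. f x \<le> C n" "\<And>n. C n < L + ennreal (1 / Suc n)"
      by blast
    have "AE x in M. \<forall>n. f x \<le> C n" using C(1) by (simp add: AE_all_countable)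
    then show ?thesis
    proof eventually_elim
      case (elim x)
      have fn: "f x \<le> L + ennreal (1 / Suc n)" for n
        using order.trans[OF spec[OF elim, of n] less_imp_le[OF C(2)[of n]]] .
      show ?case unfolding L_def[symmetric]
      proof (rule ennreal_le_epsilon)
        fix e :: real assume "0 < e"
        then obtain n where n: "1 / real (Suc n) < e" by (rule nat_approx_posE)
        have "f x \<le> L + ennreal (1 / Suc n)" by (rule fn)
        also have "\<dots> \<le> L + ennreal e" using n by (intro add_left_mono ennreal_leI) simp
        finally show "f x \<le> L + ennreal e" .
      qed
    qed
  qed
qed

lemma Lp_norm_mono:
  assumes "\<And>x. x \<in> space M \<Longrightarrow> f x \<le> g x" "1 \<le> p"
  shows "Lp_norm M p f \<le> Lp_norm M p g"
proof (cases "p = top")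
  case True
  have "AE x in M. f x \<le> g x" using assms by auto
  then have "{C. AE x in M. g x \<le> C} \<subseteq> {C. AE x in M. f x \<le> C}"
    by (auto elim: eventually_mono[OF eventually_conj] intro: order.trans)
  then show ?thesis using True unfolding Lp_norm_def by (simp add: Inf_superset_mono)
next
  case False
  then obtain r where r: "p = ennreal r" "0 \<le> r" by (cases p) auto
  then have p: "enn2real p \<ge> 1" using assms(2) by simp
  show ?thesis using False unfolding Lp_norm_def
    by (auto intro!: enn_powr_mono nn_integral_mono assms(1) simp: p)
qed


lemma lp_from_pointwise:
  fixes M :: "'b measure" and F X :: "'b \<Rightarrow> ennreal" and N :: ennreal
  assumes q: "1 \<le> q" and th: "0 \<le> \<theta>2" "0 \<le> \<theta>3" "recip q + \<theta>2 + \<theta>3 = 1"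
    and pw: "\<And>x. x \<in> space M \<Longrightarrow> F x \<le> ep (X x) (recip q) * ep N \<theta>2 * ep N \<theta>3"
    and Xm: "X \<in> borel_measurable M"
    and Xint: "(\<integral>\<^sup>+x. X x \<partial>M) \<le> N"
  shows "Lp_norm M q F \<le> N"
proof (cases "q = top")
  case True
  have Fle: "F x \<le> N" if "x \<in> space M" for x
  proof -
    have "F x \<le> ep (X x) (recip q) * ep N \<theta>2 * ep N \<theta>3" by (rule pw[OF that])
    also have "\<dots> = ep N (\<theta>2 + \<theta>3)" using True th by (simp add: ep_add)
    also have "\<theta>2 + \<theta>3 = 1" using True th by simp
    finally show ?thesis by simp
  qed
  show ?thesis unfolding True by (rule Lp_norm_top_le, rule AE_I2, rule Fle)
next
  case False
  then obtain qq where qq: "q = ennreal qq" "0 \<le> qq" by (cases q) auto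
  have qq1: "1 \<le> qq" using q qq by simp
  have rq: "recip q = 1 / qq" using qq qq1 by (simp add: recip_ennreal)
  define \<phi> where "\<phi> = \<theta>2 + \<theta>3"
  have \<phi>: "0 \<le> \<phi>" "\<phi> * qq = qq - 1" using th rq qq1 by (auto simp: \<phi>_def field_simps)
  have pw2: "enn_powr (F x) qq \<le> X x * ep N (\<phi> * qq)" if "x \<in> space M" for x
  proof -
    have "enn_powr (F x) qq \<le> enn_powr (ep (X x) (1 / qq) * ep N \<phi>) qq"
      using pw[OF that] th qq1 by (intro enn_powr_mono) (auto simp: rq \<phi>_def ep_add mult.assoc)
    also have "\<dots> = ep (ep (X x) (1 / qq)) qq * ep (ep N \<phi>) qq"
      using qq1 by (simp add: enn_powr_mult ep_pos)
    also have "\<dots> = X x * ep N (\<phi> * qq)"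
      using qq1 \<phi> by (simp add: ep_ep)
    finally show ?thesis .
  qed
  have "(\<integral>\<^sup>+x. enn_powr (F x) (enn2real q) \<partial>M) \<le> (\<integral>\<^sup>+x. X x * ep N (\<phi> * qq) \<partial>M)"
    using pw2 qq by (intro nn_integral_mono) auto
  also have "\<dots> = (\<integral>\<^sup>+x. X x \<partial>M) * ep N (\<phi> * qq)"
    using Xm by (rule nn_integral_multc)
  also have "\<dots> \<le> N * ep N (\<phi> * qq)"
    using Xint by (rule mult_right_mono) simp
  also have "\<dots> = ep N qq"
  proof -
    have "N * ep N (\<phi> * qq) = ep N 1 * ep N (\<phi> * qq)" by simp
    also have "\<dots> = ep N (1 + \<phi> * qq)" using \<phi> qq1 by (intro ep_add) auto
    also have "1 + \<phi> * qq = qq" using \<phi> by simp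
    finally show ?thesis .
  qed
  finally have I: "(\<integral>\<^sup>+x. enn_powr (F x) (enn2real q) \<partial>M) \<le> ep N qq" .
  have "Lp_norm M q F = enn_powr (\<integral>\<^sup>+x. enn_powr (F x) (enn2real q) \<partial>M) (1 / enn2real q)"
    using False by (simp add: Lp_norm_def)
  also have "\<dots> \<le> enn_powr (ep N qq) (1 / qq)"
  proof -
    have eq: "enn2real q = qq" using qq by simp
    show ?thesis unfolding eq by (rule enn_powr_mono[OF I[unfolded eq]]) (use qq1 in auto)
  qed
  also have "\<dots> = N"
    using qq1 by (simp add: ep_pos enn_powr_powr)
  finally show ?thesis .
qed

lemma powr_identity3:
  fixes W k w r p \<theta>1 \<theta>2 \<theta>3 :: real
  assumes pos: "0 < W" "0 < k" "0 < w"
    and th: "\<theta>1 + \<theta>2 + \<theta>3 = 1" "r * (\<theta>1 + \<theta>2) = 1" "p * (\<theta>1 + \<theta>3) = 1"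
  shows "(W * k powr r * w powr p) powr \<theta>1 * (W * k powr r) powr \<theta>2 * (W * w powr p) powr \<theta>3 = W * k * w"
proof -
  have "(W * k powr r * w powr p) powr \<theta>1 * (W * k powr r) powr \<theta>2 * (W * w powr p) powr \<theta>3
      = exp (\<theta>1 * (ln W + r * ln k + p * ln w) + \<theta>2 * (ln W + r * ln k) + \<theta>3 * (ln W + p * ln w))"
    using pos by (simp add: powr_def ln_mult exp_add)
  also have "\<theta>1 * (ln W + r * ln k + p * ln w) + \<theta>2 * (ln W + r * ln k) + \<theta>3 * (ln W + p * ln w)
      = (\<theta>1 + \<theta>2 + \<theta>3) * ln W + (r * (\<theta>1 + \<theta>2)) * ln k + (p * (\<theta>1 + \<theta>3)) * ln w"
    by (simp add: algebra_simps)
  also have "\<dots> = ln W + ln k + ln w" using th by simp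
  also have "exp (ln W + ln k + ln w) = W * k * w" using pos by (simp add: exp_add)
  finally show ?thesis .
qed

lemma ep_ennreal_pos: "0 < x \<Longrightarrow> ep (ennreal x) a = ennreal (x powr a)"
  by (simp add: ep_def enn_powr_ennreal)

lemma unit_bound:
  fixes g :: "'b \<Rightarrow> real" and M :: "'b measure"
  assumes gm: "g \<in> borel_measurable M" and g0: "\<And>y. 0 \<le> g y" and c: "0 < c"
    and int: "(\<integral>\<^sup>+y. ennreal (g y) \<partial>M) \<le> ennreal c"
  shows "(\<integral>\<^sup>+y. ennreal (g y / c) \<partial>M) \<le> 1"
proof -
  have "(\<integral>\<^sup>+y. ennreal (g y / c) \<partial>M) = (\<integral>\<^sup>+y. ennreal (g y) * ennreal (1 / c) \<partial>M)"
    using g0 c by (intro nn_integral_cong) (simp add: ennreal_mult[symmetric])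
  also have "\<dots> = (\<integral>\<^sup>+y. ennreal (g y) \<partial>M) * ennreal (1 / c)"
    using gm by (intro nn_integral_multc) measurable
  also have "\<dots> \<le> ennreal c * ennreal (1 / c)"
    using int by (rule mult_right_mono) simp
  also have "\<dots> = 1" using c by (simp add: ennreal_mult[symmetric])
  finally show ?thesis .
qed


lemma recip_le:
  assumes "1 \<le> p" "ennreal p \<le> q" shows "recip q \<le> 1 / p" "0 \<le> recip q"
proof -
  show "recip q \<le> 1 / p"
  proof (cases q)
    case (real qq)
    then have "p \<le> qq" using assms by simp
    then show ?thesis using real assms by (simp add: recip_ennreal frac_le)
  qed (use assms in simp)
  show "0 \<le> recip q" by (simp add: recip_def)
qed

lemma core_young:
  fixes Q :: "'a::euclidean_space set" and v \<kappa> :: "real \<Rightarrow> 'a \<Rightarrow> real" and a :: "real \<Rightarrow> real"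
    and p r t0 t :: real and q :: ennreal
  assumes Qm[measurable]: "Q \<in> sets borel"
    and vm[measurable]: "case_prod v \<in> borel_measurable (borel \<Otimes>\<^sub>M borel)"
    and \<kappa>m[measurable]: "case_prod \<kappa> \<in> borel_measurable (borel \<Otimes>\<^sub>M borel)"
    and am[measurable]: "a \<in> borel_measurable borel"
    and \<kappa>pos: "\<And>s z. t0 \<le> s \<Longrightarrow> s < t \<Longrightarrow> 0 < \<kappa> s z"
    and apos: "\<And>s. t0 \<le> s \<Longrightarrow> s < t \<Longrightarrow> 0 < a s"
    and \<kappa>int1: "\<And>s u. t0 \<le> s \<Longrightarrow> s < t \<Longrightarrow>
        (\<integral>\<^sup>+y. indicator Q y * ennreal (\<kappa> s (u - y) powr r) \<partial>lborel) \<le> ennreal (a s powr r)"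
    and \<kappa>int2: "\<And>s u. t0 \<le> s \<Longrightarrow> s < t \<Longrightarrow>
        (\<integral>\<^sup>+x. indicator Q x * ennreal (\<kappa> s (x - u) powr r) \<partial>lborel) \<le> ennreal (a s powr r)"
    and p: "1 \<le> p" and q: "ennreal p \<le> q" and r: "0 < r" "1 / r = recip q - 1 / p + 1"
  shows "Lp_norm (restrict_space lborel Q) q
            (\<lambda>x. \<integral>\<^sup>+s. indicator {t0..<t} s * (\<integral>\<^sup>+y. indicator Q y * ennreal (\<kappa> s (x - y) * \<bar>v s y\<bar>) \<partial>lborel) \<partial>lborel)
     \<le> (\<integral>\<^sup>+s. indicator {t0..<t} s * (ennreal (a s) * Lp_norm (restrict_space lborel Q) (ennreal p) (\<lambda>y. ennreal \<bar>v s y\<bar>)) \<partial>lborel)"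
proof -
  define Bi where "Bi s = (\<integral>\<^sup>+y. indicator Q y * ennreal (\<bar>v s y\<bar> powr p) \<partial>lborel)" for s
  define b where "b s = enn_powr (Bi s) (1 / p)" for s
  have Bim[measurable]: "Bi \<in> borel_measurable borel" unfolding Bi_def by measurable
  have bm[measurable]: "b \<in> borel_measurable borel" unfolding b_def by measurable
  have Lpb: "Lp_norm (restrict_space lborel Q) (ennreal p) (\<lambda>y. ennreal \<bar>v s y\<bar>) = b s" for s
    using p by (simp add: Lp_norm_def b_def Bi_def nn_integral_restrict_space enn_powr_ennreal mult.commute)
  define N where "N = (\<integral>\<^sup>+s. indicator {t0..<t} s * (ennreal (a s) * b s) \<partial>lborel)"
  define inner where "inner s x = (\<integral>\<^sup>+y. indicator Q y * ennreal (\<kappa> s (x - y) * \<bar>v s y\<bar>) \<partial>lborel)" for s x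
  define F where "F x = (\<integral>\<^sup>+s. indicator {t0..<t} s * inner s x \<partial>lborel)" for x
  have goal: "Lp_norm (restrict_space lborel Q) q F \<le> N"
  proof (cases "N = top")
    case True then show ?thesis by simp
  next
    case Nfin: False
    define \<theta>1 \<theta>2 \<theta>3 where "\<theta>1 = recip q" and "\<theta>2 = 1 - 1 / p" and "\<theta>3 = 1 / p - recip q"
    have th: "0 \<le> \<theta>1" "0 \<le> \<theta>2" "0 \<le> \<theta>3" "\<theta>1 + \<theta>2 + \<theta>3 = 1" "r * (\<theta>1 + \<theta>2) = 1" "p * (\<theta>1 + \<theta>3) = 1"
      using recip_le[OF p q] p r by (auto simp: \<theta>1_def \<theta>2_def \<theta>3_def field_simps)
    have AEfin: "AE s in lborel. t0 \<le> s \<and> s < t \<longrightarrow> b s \<noteq> top"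
    proof -
      have "AE s in lborel. indicator {t0..<t} s * (ennreal (a s) * b s) \<noteq> top"
        using nn_integral_PInf_AE[of "\<lambda>s. indicator {t0..<t} s * (ennreal (a s) * b s)" lborel] Nfin
        unfolding N_def by simp
      then show ?thesis
      proof eventually_elim
        case (elim s)
        show ?case
        proof
          assume s: "t0 \<le> s \<and> s < t"
          then have "ennreal (a s) \<noteq> 0" using apos[of s] by simp
          then show "b s \<noteq> top" using elim s by (auto simp: ennreal_mult_eq_top_iff)
        qed
      qed
    qed
    define S where "S = {s. t0 \<le> s \<and> s < t \<and> b s \<noteq> 0 \<and> b s \<noteq> top}"
    have Sm[measurable]: "S \<in> sets borel" unfolding S_def by measurable
    define bb where "bb s = enn2real (b s)" for s
    have bbm[measurable]: "bb \<in> borel_measurable borel" unfolding bb_def by measurable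
    have Sb: "b s = ennreal (bb s)" "0 < bb s" "t0 \<le> s" "s < t" if "s \<in> S" for s
      using that by (auto simp: S_def bb_def enn2real_positive_iff less_top[symmetric] ennreal_enn2real_if zero_less_iff_neq_zero)
    have inner0: "inner s x = 0" if "b s = 0" for s x
    proof -
      have "Bi s = 0" using that by (simp add: b_def enn_powr_eq_0_iff)
      then have "AE y in lborel. indicator Q y * ennreal (\<bar>v s y\<bar> powr p) = 0"
        unfolding Bi_def by (subst (asm) nn_integral_0_iff_AE) auto
      then have "AE y in lborel. indicator Q y * ennreal (\<kappa> s (x - y) * \<bar>v s y\<bar>) = 0"
      proof eventually_elim
        case (elim y)
        show ?case
        proof (cases "y \<in> Q")
          case True
          then have "\<bar>v s y\<bar> powr p \<le> 0" using elim by simp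
          then have "v s y = 0" by (smt (verit) powr_eq_0_iff powr_ge_zero)
          then show ?thesis by simp
        qed simp
      qed
      then show ?thesis unfolding inner_def by (subst nn_integral_0_iff_AE) auto
    qed
    have F_S: "F x = (\<integral>\<^sup>+s. indicator S s * inner s x \<partial>lborel)" for x
      unfolding F_def
    proof (rule nn_integral_cong_AE)
      show "AE s in lborel. indicator {t0..<t} s * inner s x = indicator S s * inner s x"
        using AEfin
      proof eventually_elim
        case (elim s)
        show ?case
        proof (cases "s \<in> S")
          case True then show ?thesis using Sb[OF True] by simp
        next
          case False
          show ?thesis
          proof (cases "t0 \<le> s \<and> s < t")
            case True
            then have "b s = 0" using elim False by (auto simp: S_def)
            then show ?thesis using inner0 by simp
          qed (use False in \<open>auto simp: S_def\<close>)
        qed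
      qed
    qed
    define H where "H x = (\<lambda>(s, y). indicator S s * indicator Q y * ennreal (\<kappa> s (x - y) * \<bar>v s y\<bar>))" for x
    have Hm[measurable]: "H x \<in> borel_measurable (lborel \<Otimes>\<^sub>M lborel)" for x unfolding H_def by measurable
    have F_prod: "F x = (\<integral>\<^sup>+z. H x z \<partial>(lborel \<Otimes>\<^sub>M lborel))" for x
    proof -
      have "F x = (\<integral>\<^sup>+s. (\<integral>\<^sup>+y. indicator S s * (indicator Q y * ennreal (\<kappa> s (x - y) * \<bar>v s y\<bar>)) \<partial>lborel) \<partial>lborel)"
        unfolding F_S inner_def by (intro nn_integral_cong nn_integral_cmult[symmetric]) measurable
      also have "\<dots> = (\<integral>\<^sup>+s. (\<integral>\<^sup>+y. H x (s, y) \<partial>lborel) \<partial>lborel)"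
        by (simp add: H_def mult.assoc)
      also have "\<dots> = (\<integral>\<^sup>+z. H x z \<partial>(lborel \<Otimes>\<^sub>M lborel))"
        by (rule lborel.nn_integral_fst) measurable
      finally show ?thesis .
    qed
    define G1 where "G1 x = (\<lambda>(s, y). indicator S s * indicator Q y *
        ennreal (a s * bb s * (\<kappa> s (x - y) / a s) powr r * (\<bar>v s y\<bar> / bb s) powr p))" for x
    define G2 where "G2 x = (\<lambda>(s, y). indicator S s * indicator Q y *
        ennreal (a s * bb s * (\<kappa> s (x - y) / a s) powr r))" for x
    define G3 where "G3 = (\<lambda>(s, y). indicator S s * indicator Q y *
        ennreal (a s * bb s * (\<bar>v s y\<bar> / bb s) powr p))"
    have G1m[measurable]: "G1 x \<in> borel_measurable (lborel \<Otimes>\<^sub>M lborel)" for x unfolding G1_def by measurable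
    have G2m[measurable]: "G2 x \<in> borel_measurable (lborel \<Otimes>\<^sub>M lborel)" for x unfolding G2_def by measurable
    have G3m[measurable]: "G3 \<in> borel_measurable (lborel \<Otimes>\<^sub>M lborel)" unfolding G3_def by measurable
    have pw: "H x z \<le> ep (G1 x z) \<theta>1 * ep (G2 x z) \<theta>2 * ep (G3 z) \<theta>3" for x z
    proof -
      obtain s y where z: "z = (s, y)" by (cases z)
      show ?thesis
      proof (cases "s \<in> S \<and> y \<in> Q \<and> v s y \<noteq> 0")
        case False
        then have "H x z = 0" by (auto simp: H_def z)
        then show ?thesis by simp
      next
        case True
        then have sS: "s \<in> S" and yQ: "y \<in> Q" and v0: "v s y \<noteq> 0" by auto
        note sb = Sb[OF sS]
        define W where "W = a s * bb s"
        define k where "k = \<kappa> s (x - y) / a s"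
        define w where "w = \<bar>v s y\<bar> / bb s"
        have pos: "0 < W" "0 < k" "0 < w"
          using sb apos[of s] \<kappa>pos[of s "x - y"] v0 by (auto simp: W_def k_def w_def)
        have "ep (G1 x z) \<theta>1 * ep (G2 x z) \<theta>2 * ep (G3 z) \<theta>3
           = ennreal ((W * k powr r * w powr p) powr \<theta>1) * ennreal ((W * k powr r) powr \<theta>2) * ennreal ((W * w powr p) powr \<theta>3)"
        proof -
          have e1: "G1 x z = ennreal (W * k powr r * w powr p)" using sS yQ by (simp add: z G1_def W_def k_def w_def)
          have e2: "G2 x z = ennreal (W * k powr r)" using sS yQ by (simp add: z G2_def W_def k_def w_def)
          have e3: "G3 z = ennreal (W * w powr p)" using sS yQ by (simp add: z G3_def W_def k_def w_def)
          have p1: "0 < W * k powr r * w powr p" "0 < W * k powr r" "0 < W * w powr p" using pos by auto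
          show ?thesis unfolding e1 e2 e3 ep_ennreal_pos[OF p1(1)] ep_ennreal_pos[OF p1(2)] ep_ennreal_pos[OF p1(3)] ..
        qed
        also have "\<dots> = ennreal ((W * k powr r * w powr p) powr \<theta>1 * (W * k powr r) powr \<theta>2 * (W * w powr p) powr \<theta>3)"
          by (simp add: ennreal_mult)
        also have "\<dots> = ennreal (W * k * w)"
          using powr_identity3[OF pos th(4-6)] by simp
        also have "W * k * w = \<kappa> s (x - y) * \<bar>v s y\<bar>"
          using sb apos[of s] by (simp add: W_def k_def w_def field_simps)
        also have "ennreal (\<kappa> s (x - y) * \<bar>v s y\<bar>) = H x z"
          using sS yQ by (simp add: H_def z)
        finally show ?thesis by simp
      qed
    qed
    have hold: "F x \<le> ep (\<integral>\<^sup>+z. G1 x z \<partial>(lborel \<Otimes>\<^sub>M lborel)) \<theta>1 * ep (\<integral>\<^sup>+z. G2 x z \<partial>(lborel \<Otimes>\<^sub>M lborel)) \<theta>2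
        * ep (\<integral>\<^sup>+z. G3 z \<partial>(lborel \<Otimes>\<^sub>M lborel)) \<theta>3" for x
    proof -
      have "F x \<le> (\<integral>\<^sup>+z. ep (G1 x z) \<theta>1 * ep (G2 x z) \<theta>2 * ep (G3 z) \<theta>3 \<partial>(lborel \<Otimes>\<^sub>M lborel))"
        unfolding F_prod by (intro nn_integral_mono pw)
      also have "\<dots> \<le> ep (\<integral>\<^sup>+z. G1 x z \<partial>(lborel \<Otimes>\<^sub>M lborel)) \<theta>1 * ep (\<integral>\<^sup>+z. G2 x z \<partial>(lborel \<Otimes>\<^sub>M lborel)) \<theta>2
        * ep (\<integral>\<^sup>+z. G3 z \<partial>(lborel \<Otimes>\<^sub>M lborel)) \<theta>3"
        by (rule holder3) (use th in auto)
      finally show ?thesis .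
    qed
    have unit1: "(\<integral>\<^sup>+y. indicator Q y * ennreal ((\<kappa> s (u - y) / a s) powr r) \<partial>lborel) \<le> 1"
      if "t0 \<le> s" "s < t" for s u
    proof -
      have "(\<integral>\<^sup>+y. indicator Q y * ennreal ((\<kappa> s (u - y) / a s) powr r) \<partial>lborel)
          = (\<integral>\<^sup>+y. ennreal (indicator Q y * \<kappa> s (u - y) powr r / a s powr r) \<partial>lborel)"
        using apos[OF that] \<kappa>pos[OF that] by (intro nn_integral_cong) (auto simp: powr_divide indicator_def)
      also have "\<dots> \<le> 1"
      proof (rule unit_bound)
        show "(\<integral>\<^sup>+y. ennreal (indicator Q y * \<kappa> s (u - y) powr r) \<partial>lborel) \<le> ennreal (a s powr r)"
          by (rule order.trans[OF eq_refl \<kappa>int1[OF that, of u]], rule nn_integral_cong) (simp add: indicator_def)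
      qed (use apos[OF that] in auto)
      finally show ?thesis .
    qed
    have unit2: "(\<integral>\<^sup>+x. indicator Q x * ennreal ((\<kappa> s (x - u) / a s) powr r) \<partial>lborel) \<le> 1"
      if "t0 \<le> s" "s < t" for s u
    proof -
      have "(\<integral>\<^sup>+x. indicator Q x * ennreal ((\<kappa> s (x - u) / a s) powr r) \<partial>lborel)
          = (\<integral>\<^sup>+x. ennreal (indicator Q x * \<kappa> s (x - u) powr r / a s powr r) \<partial>lborel)"
        using apos[OF that] \<kappa>pos[OF that] by (intro nn_integral_cong) (auto simp: powr_divide indicator_def)
      also have "\<dots> \<le> 1"
      proof (rule unit_bound)
        show "(\<integral>\<^sup>+x. ennreal (indicator Q x * \<kappa> s (x - u) powr r) \<partial>lborel) \<le> ennreal (a s powr r)"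
          by (rule order.trans[OF eq_refl \<kappa>int2[OF that, of u]], rule nn_integral_cong) (simp add: indicator_def)
      qed (use apos[OF that] in auto)
      finally show ?thesis .
    qed
    have unitv: "(\<integral>\<^sup>+y. indicator Q y * ennreal ((\<bar>v s y\<bar> / bb s) powr p) \<partial>lborel) \<le> 1"
      if "s \<in> S" for s
    proof -
      note sb = Sb[OF that]
      have "(\<integral>\<^sup>+y. indicator Q y * ennreal ((\<bar>v s y\<bar> / bb s) powr p) \<partial>lborel)
          = (\<integral>\<^sup>+y. ennreal (indicator Q y * \<bar>v s y\<bar> powr p / bb s powr p) \<partial>lborel)"
        using sb by (intro nn_integral_cong) (auto simp: powr_divide indicator_def)
      also have "\<dots> \<le> 1"
      proof (rule unit_bound)
        have "Bi s = enn_powr (b s) p" using p by (simp add: b_def enn_powr_powr)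
        also have "\<dots> = ennreal (bb s powr p)" using sb by (simp add: enn_powr_ennreal)
        finally have BB: "Bi s = ennreal (bb s powr p)" .
        show "(\<integral>\<^sup>+y. ennreal (indicator Q y * \<bar>v s y\<bar> powr p) \<partial>lborel) \<le> ennreal (bb s powr p)"
          by (rule order.trans[OF eq_refl eq_refl[OF BB[unfolded Bi_def]]], rule nn_integral_cong) (simp add: indicator_def)
      qed (use sb in auto)
      finally show ?thesis .
    qed
    have I2: "(\<integral>\<^sup>+z. G2 x z \<partial>(lborel \<Otimes>\<^sub>M lborel)) \<le> N" for x
    proof -
      have "(\<integral>\<^sup>+z. G2 x z \<partial>(lborel \<Otimes>\<^sub>M lborel)) = (\<integral>\<^sup>+s. (\<integral>\<^sup>+y. G2 x (s, y) \<partial>lborel) \<partial>lborel)"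
        by (rule lborel.nn_integral_fst[symmetric]) measurable
      also have "\<dots> \<le> N" unfolding N_def
      proof (rule nn_integral_mono)
        fix s
        show "(\<integral>\<^sup>+y. G2 x (s, y) \<partial>lborel) \<le> indicator {t0..<t} s * (ennreal (a s) * b s)"
        proof (cases "s \<in> S")
          case False then show ?thesis by (simp add: G2_def)
        next
          case True
          note sb = Sb[OF True]
          have "(\<integral>\<^sup>+y. G2 x (s, y) \<partial>lborel)
              = (\<integral>\<^sup>+y. ennreal (a s * bb s) * (indicator Q y * ennreal ((\<kappa> s (x - y) / a s) powr r)) \<partial>lborel)"
            using True sb apos[of s] by (intro nn_integral_cong) (simp add: G2_def ennreal_mult mult_ac)
          also have "\<dots> = ennreal (a s * bb s) * (\<integral>\<^sup>+y. indicator Q y * ennreal ((\<kappa> s (x - y) / a s) powr r) \<partial>lborel)"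
            by (rule nn_integral_cmult) measurable
          also have "\<dots> \<le> ennreal (a s * bb s) * 1"
            using unit1[OF sb(3,4)] by (rule mult_left_mono) simp
          also have "\<dots> = indicator {t0..<t} s * (ennreal (a s) * b s)"
            using sb apos[of s] by (simp add: ennreal_mult)
          finally show ?thesis .
        qed
      qed
      finally show ?thesis .
    qed
    have I3: "(\<integral>\<^sup>+z. G3 z \<partial>(lborel \<Otimes>\<^sub>M lborel)) \<le> N"
    proof -
      have "(\<integral>\<^sup>+z. G3 z \<partial>(lborel \<Otimes>\<^sub>M lborel)) = (\<integral>\<^sup>+s. (\<integral>\<^sup>+y. G3 (s, y) \<partial>lborel) \<partial>lborel)"
        by (rule lborel.nn_integral_fst[symmetric]) measurable
      also have "\<dots> \<le> N" unfolding N_def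
      proof (rule nn_integral_mono)
        fix s
        show "(\<integral>\<^sup>+y. G3 (s, y) \<partial>lborel) \<le> indicator {t0..<t} s * (ennreal (a s) * b s)"
        proof (cases "s \<in> S")
          case False then show ?thesis by (simp add: G3_def)
        next
          case True
          note sb = Sb[OF True]
          have "(\<integral>\<^sup>+y. G3 (s, y) \<partial>lborel)
              = (\<integral>\<^sup>+y. ennreal (a s * bb s) * (indicator Q y * ennreal ((\<bar>v s y\<bar> / bb s) powr p)) \<partial>lborel)"
            using True sb apos[of s] by (intro nn_integral_cong) (simp add: G3_def ennreal_mult mult_ac)
          also have "\<dots> = ennreal (a s * bb s) * (\<integral>\<^sup>+y. indicator Q y * ennreal ((\<bar>v s y\<bar> / bb s) powr p) \<partial>lborel)"
            by (rule nn_integral_cmult) measurable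
          also have "\<dots> \<le> ennreal (a s * bb s) * 1"
            using unitv[OF True] by (rule mult_left_mono) simp
          also have "\<dots> = indicator {t0..<t} s * (ennreal (a s) * b s)"
            using sb apos[of s] by (simp add: ennreal_mult)
          finally show ?thesis .
        qed
      qed
      finally show ?thesis .
    qed
    define X where "X x = (\<integral>\<^sup>+s. (\<integral>\<^sup>+y. G1 x (s, y) \<partial>lborel) \<partial>lborel)" for x
    have Xm[measurable]: "X \<in> borel_measurable borel" unfolding X_def G1_def by measurable
    have Xprod: "X x = (\<integral>\<^sup>+z. G1 x z \<partial>(lborel \<Otimes>\<^sub>M lborel))" for x
      unfolding X_def by (rule lborel.nn_integral_fst) measurable
    have psf: "pair_sigma_finite (lborel::'a measure) (lborel \<Otimes>\<^sub>M (lborel::'a measure) :: (real \<times> 'a) measure)"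
      unfolding pair_sigma_finite_def
      using sigma_finite_pair_measure[OF lborel.sigma_finite_measure_axioms lborel.sigma_finite_measure_axioms]
        lborel.sigma_finite_measure_axioms by auto
    interpret P2: pair_sigma_finite "lborel::'a measure" "lborel \<Otimes>\<^sub>M (lborel::'a measure) :: (real \<times> 'a) measure"
      by (rule psf)
    have IX: "(\<integral>\<^sup>+x. X x \<partial>(restrict_space lborel Q)) \<le> N"
    proof -
      have "(\<integral>\<^sup>+x. X x \<partial>(restrict_space lborel Q)) = (\<integral>\<^sup>+x. X x * indicator Q x \<partial>lborel)"
        by (rule nn_integral_restrict_space) simp
      also have "\<dots> = (\<integral>\<^sup>+x. (\<integral>\<^sup>+z. indicator Q x * G1 x z \<partial>(lborel \<Otimes>\<^sub>M lborel)) \<partial>lborel)"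
      proof (intro nn_integral_cong)
        fix x :: 'a
        show "X x * indicator Q x = (\<integral>\<^sup>+z. indicator Q x * G1 x z \<partial>(lborel \<Otimes>\<^sub>M lborel))"
          using nn_integral_cmult[OF G1m[of x], of "indicator Q x"] unfolding Xprod by (simp add: mult.commute)
      qed
      also have "\<dots> = (\<integral>\<^sup>+z. (\<integral>\<^sup>+x. indicator Q x * G1 x z \<partial>lborel) \<partial>(lborel \<Otimes>\<^sub>M lborel))"
        by (rule P2.Fubini'[symmetric]) (unfold G1_def, measurable)
      also have "\<dots> \<le> (\<integral>\<^sup>+z. G3 z \<partial>(lborel \<Otimes>\<^sub>M lborel))"
      proof (rule nn_integral_mono)
        fix z :: "real \<times> 'a"
        obtain s y where z: "z = (s, y)" by (cases z)
        show "(\<integral>\<^sup>+x. indicator Q x * G1 x z \<partial>lborel) \<le> G3 z"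
        proof (cases "s \<in> S \<and> y \<in> Q")
          case False then show ?thesis by (auto simp: z G1_def)
        next
          case True
          then have sS: "s \<in> S" and yQ: "y \<in> Q" by auto
          note sb = Sb[OF sS]
          define c where "c = a s * bb s * (\<bar>v s y\<bar> / bb s) powr p"
          have c: "0 \<le> c" using sb apos[of s] by (simp add: c_def)
          have "(\<integral>\<^sup>+x. indicator Q x * G1 x z \<partial>lborel)
              = (\<integral>\<^sup>+x. ennreal c * (indicator Q x * ennreal ((\<kappa> s (x - y) / a s) powr r)) \<partial>lborel)"
          proof (intro nn_integral_cong)
            fix x
            have "G1 x z = ennreal (c * (\<kappa> s (x - y) / a s) powr r)"
              using sS yQ by (simp add: z G1_def c_def mult_ac)
            also have "\<dots> = ennreal c * ennreal ((\<kappa> s (x - y) / a s) powr r)"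
              using c by (intro ennreal_mult) auto
            finally show "indicator Q x * G1 x z = ennreal c * (indicator Q x * ennreal ((\<kappa> s (x - y) / a s) powr r))"
              by (simp add: mult_ac)
          qed
          also have "\<dots> = ennreal c * (\<integral>\<^sup>+x. indicator Q x * ennreal ((\<kappa> s (x - y) / a s) powr r) \<partial>lborel)"
            by (rule nn_integral_cmult) measurable
          also have "\<dots> \<le> ennreal c * 1"
            using unit2[OF sb(3,4)] by (rule mult_left_mono) simp
          also have "\<dots> = G3 z" using sS yQ by (simp add: z G3_def c_def)
          finally show ?thesis .
        qed
      qed
      also have "\<dots> \<le> N" by (rule I3)
      finally show ?thesis .
    qed
    show ?thesis
    proof (rule lp_from_pointwise[of q \<theta>2 \<theta>3 _ _ X])
      have "1 \<le> ennreal p" using p by simp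
      then show "1 \<le> q" using q by (rule order.trans)
      show "0 \<le> \<theta>2" "0 \<le> \<theta>3" "recip q + \<theta>2 + \<theta>3 = 1" using th by (auto simp: \<theta>1_def)
      show "X \<in> borel_measurable (restrict_space lborel Q)"
        by (rule measurable_restrict_space1) simp
      show "(\<integral>\<^sup>+x. X x \<partial>(restrict_space lborel Q)) \<le> N" by (rule IX)
      fix x
      have "F x \<le> ep (X x) \<theta>1 * ep (\<integral>\<^sup>+z. G2 x z \<partial>(lborel \<Otimes>\<^sub>M lborel)) \<theta>2
          * ep (\<integral>\<^sup>+z. G3 z \<partial>(lborel \<Otimes>\<^sub>M lborel)) \<theta>3"
        using hold[of x] unfolding Xprod .
      also have "\<dots> \<le> ep (X x) \<theta>1 * ep N \<theta>2 * ep N \<theta>3"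
        using th by (intro mult_mono ep_mono I2 I3) auto
      finally show "F x \<le> ep (X x) (recip q) * ep N \<theta>2 * ep N \<theta>3" by (simp add: \<theta>1_def)
    qed
  qed
  then show ?thesis unfolding Lpb F_def[abs_def] inner_def N_def .
qed

lemma kernel_int:
  fixes u :: "'a::euclidean_space" and Q :: "'a set"
  assumes C: "0 < C" and c: "0 < c" and \<tau>: "0 < \<tau>" and r: "0 < r" and \<beta>: "1 \<le> \<beta>" and \<gamma>: "0 < \<gamma>"
  defines "I \<equiv> enn2real (\<integral>\<^sup>+w. ennreal (exp (- (c * r) * norm (w::'a) powr \<beta>)) \<partial>lborel)"
  shows "(\<integral>\<^sup>+y. indicator Q y * ennreal ((C * \<tau> powr (- \<alpha>) * exp (- c * norm (u - y) powr \<beta> / \<tau> powr \<gamma>)) powr r) \<partial>lborel)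
     \<le> ennreal ((C * \<tau> powr (- \<alpha>) * \<tau> powr (\<gamma> * real DIM('a) / (\<beta> * r)) * (I + 1) powr (1 / r)) powr r)"
proof -
  define A where "A = (C * \<tau> powr (- \<alpha>)) powr r"
  have A: "0 \<le> A" by (simp add: A_def)
  have Ifin: "(\<integral>\<^sup>+w. ennreal (exp (- (c * r) * norm (w::'a) powr \<beta>)) \<partial>lborel) < \<infinity>"
    by (rule Iexp_finite) (use c r \<beta> in auto)
  have Ile: "(\<integral>\<^sup>+w. ennreal (exp (- (c * r) * norm (w::'a) powr \<beta>)) \<partial>lborel) \<le> ennreal (I + 1)"
  proof -
    have "(\<integral>\<^sup>+w. ennreal (exp (- (c * r) * norm (w::'a) powr \<beta>)) \<partial>lborel) = ennreal I"
      using Ifin unfolding I_def by (simp add: ennreal_enn2real_if less_top[symmetric])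
    then show ?thesis by (simp add: ennreal_leI)
  qed
  have "(\<integral>\<^sup>+y. indicator Q y * ennreal ((C * \<tau> powr (- \<alpha>) * exp (- c * norm (u - y) powr \<beta> / \<tau> powr \<gamma>)) powr r) \<partial>lborel)
     \<le> (\<integral>\<^sup>+y. ennreal A * ennreal (exp (- (c * r) * norm (u - y) powr \<beta> / \<tau> powr \<gamma>)) \<partial>lborel)"
  proof (rule nn_integral_mono)
    fix y :: 'a
    have "(C * \<tau> powr (- \<alpha>) * exp (- c * norm (u - y) powr \<beta> / \<tau> powr \<gamma>)) powr r
        = A * exp (- c * norm (u - y) powr \<beta> / \<tau> powr \<gamma>) powr r"
      using C \<tau> by (simp add: A_def powr_mult)
    also have "exp (- c * norm (u - y) powr \<beta> / \<tau> powr \<gamma>) powr r = exp (- (c * r) * norm (u - y) powr \<beta> / \<tau> powr \<gamma>)"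
      by (simp add: powr_def)
    finally have eq: "(C * \<tau> powr (- \<alpha>) * exp (- c * norm (u - y) powr \<beta> / \<tau> powr \<gamma>)) powr r
        = A * exp (- (c * r) * norm (u - y) powr \<beta> / \<tau> powr \<gamma>)" .
    show "indicator Q y * ennreal ((C * \<tau> powr (- \<alpha>) * exp (- c * norm (u - y) powr \<beta> / \<tau> powr \<gamma>)) powr r)
        \<le> ennreal A * ennreal (exp (- (c * r) * norm (u - y) powr \<beta> / \<tau> powr \<gamma>))"
      unfolding eq using A by (auto simp: indicator_def ennreal_mult)
  qed
  also have "\<dots> = ennreal A * (\<integral>\<^sup>+y. ennreal (exp (- (c * r) * norm (u - y) powr \<beta> / \<tau> powr \<gamma>)) \<partial>lborel)"
    by (rule nn_integral_cmult) measurable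
  also have "(\<integral>\<^sup>+y. ennreal (exp (- (c * r) * norm (u - y) powr \<beta> / \<tau> powr \<gamma>)) \<partial>lborel)
      = ennreal (\<tau> powr (\<gamma> * real DIM('a) / \<beta>)) * (\<integral>\<^sup>+w. ennreal (exp (- (c * r) * norm (w::'a) powr \<beta>)) \<partial>lborel)"
    by (rule kernel_scaling) (use c r \<tau> \<beta> \<gamma> in auto)
  also have "ennreal A * (ennreal (\<tau> powr (\<gamma> * real DIM('a) / \<beta>)) * (\<integral>\<^sup>+w. ennreal (exp (- (c * r) * norm (w::'a) powr \<beta>)) \<partial>lborel))
      \<le> ennreal A * (ennreal (\<tau> powr (\<gamma> * real DIM('a) / \<beta>)) * ennreal (I + 1))"
    by (intro mult_left_mono Ile) auto
  also have "\<dots> = ennreal (A * \<tau> powr (\<gamma> * real DIM('a) / \<beta>) * (I + 1))"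
    using A by (simp add: ennreal_mult I_def mult.assoc)
  also have "A * \<tau> powr (\<gamma> * real DIM('a) / \<beta>) * (I + 1)
      = (C * \<tau> powr (- \<alpha>) * \<tau> powr (\<gamma> * real DIM('a) / (\<beta> * r)) * (I + 1) powr (1 / r)) powr r"
  proof -
    have I0: "0 \<le> I" by (simp add: I_def)
    have "(C * \<tau> powr (- \<alpha>) * \<tau> powr (\<gamma> * real DIM('a) / (\<beta> * r)) * (I + 1) powr (1 / r)) powr r
        = A * (\<tau> powr (\<gamma> * real DIM('a) / (\<beta> * r))) powr r * ((I + 1) powr (1 / r)) powr r"
      using C \<tau> I0 by (simp add: A_def powr_mult)
    also have "(\<tau> powr (\<gamma> * real DIM('a) / (\<beta> * r))) powr r = \<tau> powr (\<gamma> * real DIM('a) / \<beta>)"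
      using r \<beta> by (simp add: powr_powr)
    also have "((I + 1) powr (1 / r)) powr r = I + 1"
      using r I0 by (simp add: powr_powr)
    finally show ?thesis by simp
  qed
  finally show ?thesis .
qed


lemma abs_set_integral_le:
  fixes f :: "'b \<Rightarrow> real"
  shows "ennreal \<bar>LINT s:A|M. f s\<bar> \<le> (\<integral>\<^sup>+s. indicator A s * ennreal \<bar>f s\<bar> \<partial>M)"
proof (cases "integrable M (\<lambda>s. indicator A s *\<^sub>R f s)")
  case True
  have "ennreal \<bar>LINT s:A|M. f s\<bar> = ennreal (norm (integral\<^sup>L M (\<lambda>s. indicator A s *\<^sub>R f s)))"
    by (simp add: set_lebesgue_integral_def)
  also have "\<dots> \<le> (\<integral>\<^sup>+s. ennreal (norm (indicator A s *\<^sub>R f s)) \<partial>M)"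
    by (rule integral_norm_bound_ennreal[OF True])
  also have "\<dots> = (\<integral>\<^sup>+s. indicator A s * ennreal \<bar>f s\<bar> \<partial>M)"
    by (intro nn_integral_cong) (simp add: indicator_def)
  finally show ?thesis .
next
  case False
  then show ?thesis by (simp add: set_lebesgue_integral_def not_integrable_integral_eq)
qed

lemma J_le:
  fixes Q :: "'a::euclidean_space set" and H :: "real \<Rightarrow> 'a \<Rightarrow> real \<Rightarrow> 'a \<Rightarrow> real"
    and \<kappa> :: "real \<Rightarrow> 'a \<Rightarrow> real"
  assumes Hb: "\<And>s y. t0 \<le> s \<Longrightarrow> s < t \<Longrightarrow> y \<in> Q \<Longrightarrow> \<bar>H t x s y\<bar> \<le> \<kappa> s (x - y)"
  shows "ennreal \<bar>Jop Q H v t0 t x\<bar>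
     \<le> (\<integral>\<^sup>+s. indicator {t0..<t} s * (\<integral>\<^sup>+y. indicator Q y * ennreal (\<kappa> s (x - y) * \<bar>v s y\<bar>) \<partial>lborel) \<partial>lborel)"
proof -
  have "ennreal \<bar>Jop Q H v t0 t x\<bar> \<le> (\<integral>\<^sup>+s. indicator {t0..t} s * ennreal \<bar>LINT y:Q|lborel. H t x s y * v s y\<bar> \<partial>lborel)"
    unfolding Jop_def by (rule abs_set_integral_le)
  also have "\<dots> \<le> (\<integral>\<^sup>+s. indicator {t0..<t} s * (\<integral>\<^sup>+y. indicator Q y * ennreal (\<kappa> s (x - y) * \<bar>v s y\<bar>) \<partial>lborel) \<partial>lborel)"
  proof (rule nn_integral_mono_AE)
    show "AE s in lborel. indicator {t0..t} s * ennreal \<bar>LINT y:Q|lborel. H t x s y * v s y\<bar>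
        \<le> indicator {t0..<t} s * (\<integral>\<^sup>+y. indicator Q y * ennreal (\<kappa> s (x - y) * \<bar>v s y\<bar>) \<partial>lborel)"
      using AE_lborel_singleton[of t]
    proof eventually_elim
      case (elim s)
      show ?case
      proof (cases "t0 \<le> s \<and> s < t")
        case True
        have "ennreal \<bar>LINT y:Q|lborel. H t x s y * v s y\<bar> \<le> (\<integral>\<^sup>+y. indicator Q y * ennreal \<bar>H t x s y * v s y\<bar> \<partial>lborel)"
          by (rule abs_set_integral_le)
        also have "\<dots> \<le> (\<integral>\<^sup>+y. indicator Q y * ennreal (\<kappa> s (x - y) * \<bar>v s y\<bar>) \<partial>lborel)"
        proof (rule nn_integral_mono)
          fix y
          show "indicator Q y * ennreal \<bar>H t x s y * v s y\<bar> \<le> indicator Q y * ennreal (\<kappa> s (x - y) * \<bar>v s y\<bar>)"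
          proof (cases "y \<in> Q")
            case True
            have "\<bar>H t x s y * v s y\<bar> \<le> \<kappa> s (x - y) * \<bar>v s y\<bar>"
              unfolding abs_mult using Hb[of s y] \<open>t0 \<le> s \<and> s < t\<close> True by (intro mult_right_mono) auto
            then show ?thesis using True by (simp add: ennreal_leI)
          qed simp
        qed
        finally show ?thesis using True by simp
      next
        case False
        then have "s \<notin> {t0..t}" using elim by auto
        then show ?thesis by simp
      qed
    qed
  qed
  finally show ?thesis .
qed

lemma Lp_meas:
  fixes Q :: "'a::euclidean_space set" and v :: "real \<Rightarrow> 'a \<Rightarrow> real"
  assumes Qm[measurable]: "Q \<in> sets borel" and vm[measurable]: "case_prod v \<in> borel_measurable (borel \<Otimes>\<^sub>M borel)"
    and \<rho>: "1 \<le> \<rho>"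
  shows "(\<lambda>s. Lp_norm (restrict_space lborel Q) \<rho> (\<lambda>y. ennreal \<bar>v s y\<bar>)) \<in> borel_measurable borel"
proof (cases "\<rho> = top")
  case False
  then have eq: "Lp_norm (restrict_space lborel Q) \<rho> (\<lambda>y. ennreal \<bar>v s y\<bar>)
     = enn_powr (\<integral>\<^sup>+y. enn_powr (ennreal \<bar>v s y\<bar>) (enn2real \<rho>) * indicator Q y \<partial>lborel) (1 / enn2real \<rho>)" for s
    by (simp add: Lp_norm_def nn_integral_restrict_space)
  show ?thesis unfolding eq by measurable
next
  case True
  define g where "g s C = (\<integral>\<^sup>+y. indicator Q y * indicator {y. C < ennreal \<bar>v s y\<bar>} y \<partial>lborel)" for s C
  have gm: "(\<lambda>s. g s C) \<in> borel_measurable borel" for C unfolding g_def by measurable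
  have iff: "Lp_norm (restrict_space lborel Q) \<rho> (\<lambda>y. ennreal \<bar>v s y\<bar>) \<le> C \<longleftrightarrow> g s C = 0" for s C
  proof
    assume le: "Lp_norm (restrict_space lborel Q) \<rho> (\<lambda>y. ennreal \<bar>v s y\<bar>) \<le> C"
    have "AE y in restrict_space lborel Q. ennreal \<bar>v s y\<bar> \<le> C"
      using AE_le_Lp_norm_top[where M="restrict_space lborel Q" and f="\<lambda>y. ennreal \<bar>v s y\<bar>"] le True
      by (auto elim: eventually_mono)
    then have "AE y in lborel. y \<in> Q \<longrightarrow> ennreal \<bar>v s y\<bar> \<le> C"
      by (subst (asm) AE_restrict_space_iff) auto
    then have "AE y in lborel. indicator Q y * indicator {y. C < ennreal \<bar>v s y\<bar>} y = (0::ennreal)"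
      by eventually_elim (auto simp: indicator_def not_less)
    then show "g s C = 0" unfolding g_def by (subst nn_integral_0_iff_AE) auto
  next
    assume "g s C = 0"
    then have "AE y in lborel. indicator Q y * indicator {y. C < ennreal \<bar>v s y\<bar>} y = (0::ennreal)"
      unfolding g_def by (subst (asm) nn_integral_0_iff_AE) auto
    then have "AE y in lborel. y \<in> Q \<longrightarrow> ennreal \<bar>v s y\<bar> \<le> C"
      by eventually_elim (auto simp: indicator_def not_less split: if_splits)
    then have "AE y in restrict_space lborel Q. ennreal \<bar>v s y\<bar> \<le> C"
      by (subst AE_restrict_space_iff) auto
    then show "Lp_norm (restrict_space lborel Q) \<rho> (\<lambda>y. ennreal \<bar>v s y\<bar>) \<le> C"
      unfolding True by (rule Lp_norm_top_le)
  qed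
  show ?thesis
  proof (rule borel_measurableI_le)
    fix C
    have "{s \<in> space borel. Lp_norm (restrict_space lborel Q) \<rho> (\<lambda>y. ennreal \<bar>v s y\<bar>) \<le> C} = {s \<in> space borel. g s C = 0}"
      using iff by auto
    also have "\<dots> \<in> sets borel" using gm[of C] by measurable
    finally show "{s \<in> space borel. Lp_norm (restrict_space lborel Q) \<rho> (\<lambda>y. ennreal \<bar>v s y\<bar>) \<le> C} \<in> sets borel" .
  qed
qed

lemma recip_ge0: "0 \<le> recip q" by (simp add: recip_def)

lemma recip_zero_imp: "1 \<le> q \<Longrightarrow> recip q = 0 \<Longrightarrow> q = top"
  by (cases q) (auto simp: recip_ennreal)

lemma caseC:
  fixes Q :: "'a::euclidean_space set" and \<alpha> :: real
  assumes Qm[measurable]: "Q \<in> sets borel" and C: "0 < C" and c: "0 < c" and \<beta>: "1 \<le> \<beta>" and \<gamma>: "0 < \<gamma>"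
    and p: "1 \<le> p" and q: "ennreal p \<le> q" and rinv: "0 < recip q - 1 / p + 1"
  defines "e \<equiv> - \<alpha> + \<gamma> * real DIM('a) * (recip q - 1 / p + 1) / \<beta>"
  shows "\<exists>K'>0. \<forall>v. case_prod v \<in> borel_measurable (borel \<Otimes>\<^sub>M borel) \<longrightarrow> (\<forall>t0 t.
     Lp_norm (restrict_space lborel Q) q (\<lambda>x. \<integral>\<^sup>+s. indicator {t0..<t} s * (\<integral>\<^sup>+y. indicator Q y *
        ennreal ((C * (t - s) powr (- \<alpha>) * exp (- c * norm (x - y) powr \<beta> / (t - s) powr \<gamma>)) * \<bar>v s y\<bar>) \<partial>lborel) \<partial>lborel)
     \<le> (\<integral>\<^sup>+s. indicator {t0..<t} s * (ennreal (K' * (t - s) powr e) * Lp_norm (restrict_space lborel Q) (ennreal p) (\<lambda>y. ennreal \<bar>v s y\<bar>)) \<partial>lborel))"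
proof -
  define r where "r = 1 / (recip q - 1 / p + 1)"
  have r: "0 < r" "1 / r = recip q - 1 / p + 1" using rinv by (auto simp: r_def)
  define I where "I = enn2real (\<integral>\<^sup>+w. ennreal (exp (- (c * r) * norm (w::'a) powr \<beta>)) \<partial>lborel)"
  have I0: "0 \<le> I" by (simp add: I_def)
  define K' where "K' = C * (I + 1) powr (1 / r)"
  have K': "0 < K'" using C I0 by (simp add: K'_def)
  have e: "e = - \<alpha> + \<gamma> * real DIM('a) / (\<beta> * r)"
    unfolding e_def using r \<beta> by (simp add: field_simps r_def)
  show ?thesis
  proof (intro exI[of _ K'] conjI allI impI K')
    fix v :: "real \<Rightarrow> 'a \<Rightarrow> real" and t0 t :: real
    assume vm[measurable]: "case_prod v \<in> borel_measurable (borel \<Otimes>\<^sub>M borel)"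
    define \<kappa> where "\<kappa> s z = C * (t - s) powr (- \<alpha>) * exp (- c * norm z powr \<beta> / (t - s) powr \<gamma>)" for s and z :: 'a
    define a where "a s = K' * (t - s) powr e" for s
    have aeq: "a s = C * (t - s) powr (- \<alpha>) * (t - s) powr (\<gamma> * real DIM('a) / (\<beta> * r)) * (I + 1) powr (1 / r)"
      if "s < t" for s
    proof -
      have "(t - s) powr e = (t - s) powr (- \<alpha>) * (t - s) powr (\<gamma> * real DIM('a) / (\<beta> * r))"
        unfolding e by (rule powr_add)
      then show ?thesis by (simp add: a_def K'_def mult_ac)
    qed
    have "Lp_norm (restrict_space lborel Q) q
            (\<lambda>x. \<integral>\<^sup>+s. indicator {t0..<t} s * (\<integral>\<^sup>+y. indicator Q y * ennreal (\<kappa> s (x - y) * \<bar>v s y\<bar>) \<partial>lborel) \<partial>lborel)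
     \<le> (\<integral>\<^sup>+s. indicator {t0..<t} s * (ennreal (a s) * Lp_norm (restrict_space lborel Q) (ennreal p) (\<lambda>y. ennreal \<bar>v s y\<bar>)) \<partial>lborel)"
    proof (rule core_young[OF Qm vm _ _ _ _ _ _ p q r])
      show "case_prod \<kappa> \<in> borel_measurable (borel \<Otimes>\<^sub>M borel)" unfolding \<kappa>_def by measurable
      show "a \<in> borel_measurable borel" unfolding a_def by measurable
      show "0 < \<kappa> s z" if "t0 \<le> s" "s < t" for s z using that C by (simp add: \<kappa>_def)
      show "0 < a s" if "t0 \<le> s" "s < t" for s using that K' by (simp add: a_def)
      show "(\<integral>\<^sup>+y. indicator Q y * ennreal (\<kappa> s (u - y) powr r) \<partial>lborel) \<le> ennreal (a s powr r)"
        if "t0 \<le> s" "s < t" for s u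
        unfolding \<kappa>_def aeq[OF that(2)] I_def
        by (rule kernel_int) (use that C c r \<beta> \<gamma> in auto)
      show "(\<integral>\<^sup>+x. indicator Q x * ennreal (\<kappa> s (x - u) powr r) \<partial>lborel) \<le> ennreal (a s powr r)"
        if "t0 \<le> s" "s < t" for s u
        unfolding \<kappa>_def aeq[OF that(2)] I_def norm_minus_commute[of _ u]
        by (rule kernel_int) (use that C c r \<beta> \<gamma> in auto)
    qed
    then show "Lp_norm (restrict_space lborel Q) q (\<lambda>x. \<integral>\<^sup>+s. indicator {t0..<t} s * (\<integral>\<^sup>+y. indicator Q y *
        ennreal ((C * (t - s) powr (- \<alpha>) * exp (- c * norm (x - y) powr \<beta> / (t - s) powr \<gamma>)) * \<bar>v s y\<bar>) \<partial>lborel) \<partial>lborel)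
     \<le> (\<integral>\<^sup>+s. indicator {t0..<t} s * (ennreal (K' * (t - s) powr e) * Lp_norm (restrict_space lborel Q) (ennreal p) (\<lambda>y. ennreal \<bar>v s y\<bar>)) \<partial>lborel)"
      unfolding \<kappa>_def a_def .
  qed
qed


lemma caseA:
  fixes Q :: "'a::euclidean_space set" and \<alpha> :: real
  assumes Qm[measurable]: "Q \<in> sets borel" and C: "0 < C" and c: "0 < c" and \<beta>: "1 \<le> \<beta>" and \<gamma>: "0 < \<gamma>"
  shows "\<exists>K'>0. \<forall>v. case_prod v \<in> borel_measurable (borel \<Otimes>\<^sub>M borel) \<longrightarrow> (\<forall>t0 t.
     Lp_norm (restrict_space lborel Q) top (\<lambda>x. \<integral>\<^sup>+s. indicator {t0..<t} s * (\<integral>\<^sup>+y. indicator Q y *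
        ennreal ((C * (t - s) powr (- \<alpha>) * exp (- c * norm (x - y) powr \<beta> / (t - s) powr \<gamma>)) * \<bar>v s y\<bar>) \<partial>lborel) \<partial>lborel)
     \<le> (\<integral>\<^sup>+s. indicator {t0..<t} s * (ennreal (K' * (t - s) powr (- \<alpha> + \<gamma> * real DIM('a) / \<beta>)) * Lp_norm (restrict_space lborel Q) top (\<lambda>y. ennreal \<bar>v s y\<bar>)) \<partial>lborel))"
proof -
  define I where "I = enn2real (\<integral>\<^sup>+w. ennreal (exp (- (c * 1) * norm (w::'a) powr \<beta>)) \<partial>lborel)"
  have I0: "0 \<le> I" by (simp add: I_def)
  define K' where "K' = C * (I + 1)"
  have K': "0 < K'" using C I0 by (simp add: K'_def)
  show ?thesis
  proof (intro exI[of _ K'] conjI allI impI K')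
    fix v :: "real \<Rightarrow> 'a \<Rightarrow> real" and t0 t :: real
    assume vm[measurable]: "case_prod v \<in> borel_measurable (borel \<Otimes>\<^sub>M borel)"
    define \<kappa> where "\<kappa> s z = C * (t - s) powr (- \<alpha>) * exp (- c * norm z powr \<beta> / (t - s) powr \<gamma>)" for s and z :: 'a
    define b where "b s = Lp_norm (restrict_space lborel Q) top (\<lambda>y. ennreal \<bar>v s y\<bar>)" for s
    define a where "a s = K' * (t - s) powr (- \<alpha> + \<gamma> * real DIM('a) / \<beta>)" for s
    have inner: "(\<integral>\<^sup>+y. indicator Q y * ennreal (\<kappa> s (x - y) * \<bar>v s y\<bar>) \<partial>lborel) \<le> ennreal (a s) * b s"
      if s: "t0 \<le> s" "s < t" for s x
    proof -
      have "AE y in restrict_space lborel Q. ennreal \<bar>v s y\<bar> \<le> b s"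
        unfolding b_def by (rule AE_le_Lp_norm_top)
      then have AEv: "AE y in lborel. y \<in> Q \<longrightarrow> ennreal \<bar>v s y\<bar> \<le> b s"
        by (subst (asm) AE_restrict_space_iff) auto
      have "(\<integral>\<^sup>+y. indicator Q y * ennreal (\<kappa> s (x - y) * \<bar>v s y\<bar>) \<partial>lborel)
          \<le> (\<integral>\<^sup>+y. (indicator Q y * ennreal (\<kappa> s (x - y) powr 1)) * b s \<partial>lborel)"
      proof (rule nn_integral_mono_AE)
        show "AE y in lborel. indicator Q y * ennreal (\<kappa> s (x - y) * \<bar>v s y\<bar>) \<le> indicator Q y * ennreal (\<kappa> s (x - y) powr 1) * b s"
          using AEv
        proof eventually_elim
          case (elim y)
          have kp: "0 < \<kappa> s (x - y)" using s C by (simp add: \<kappa>_def)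
          show ?case
          proof (cases "y \<in> Q")
            case True
            have "ennreal (\<kappa> s (x - y) * \<bar>v s y\<bar>) = ennreal (\<kappa> s (x - y)) * ennreal \<bar>v s y\<bar>"
              using kp by (simp add: ennreal_mult)
            also have "\<dots> \<le> ennreal (\<kappa> s (x - y)) * b s"
              using elim True by (intro mult_left_mono) auto
            finally show ?thesis using True kp by simp
          qed simp
        qed
      qed
      also have "\<dots> = (\<integral>\<^sup>+y. indicator Q y * ennreal (\<kappa> s (x - y) powr 1) \<partial>lborel) * b s"
        by (rule nn_integral_multc) (unfold \<kappa>_def, measurable)
      also have "\<dots> \<le> ennreal (a s) * b s"
      proof (rule mult_right_mono)
        have "(\<integral>\<^sup>+y. indicator Q y * ennreal (\<kappa> s (x - y) powr 1) \<partial>lborel)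
          \<le> ennreal ((C * (t - s) powr (- \<alpha>) * (t - s) powr (\<gamma> * real DIM('a) / (\<beta> * 1)) * (I + 1) powr (1 / 1)) powr 1)"
          unfolding \<kappa>_def I_def by (rule kernel_int) (use s C c \<beta> \<gamma> in auto)
        also have "(C * (t - s) powr (- \<alpha>) * (t - s) powr (\<gamma> * real DIM('a) / (\<beta> * 1)) * (I + 1) powr (1 / 1)) powr 1 = a s"
        proof -
          have "(t - s) powr (- \<alpha> + \<gamma> * real DIM('a) / \<beta>) = (t - s) powr (- \<alpha>) * (t - s) powr (\<gamma> * real DIM('a) / \<beta>)"
            by (rule powr_add)
          then show ?thesis using s C I0 by (simp add: a_def K'_def mult_ac)
        qed
        finally show "(\<integral>\<^sup>+y. indicator Q y * ennreal (\<kappa> s (x - y) powr 1) \<partial>lborel) \<le> ennreal (a s)" .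
      qed simp
      finally show ?thesis .
    qed
    have "Lp_norm (restrict_space lborel Q) top
            (\<lambda>x. \<integral>\<^sup>+s. indicator {t0..<t} s * (\<integral>\<^sup>+y. indicator Q y * ennreal (\<kappa> s (x - y) * \<bar>v s y\<bar>) \<partial>lborel) \<partial>lborel)
     \<le> (\<integral>\<^sup>+s. indicator {t0..<t} s * (ennreal (a s) * b s) \<partial>lborel)"
    proof (rule Lp_norm_top_le, rule AE_I2)
      fix x
      show "(\<integral>\<^sup>+s. indicator {t0..<t} s * (\<integral>\<^sup>+y. indicator Q y * ennreal (\<kappa> s (x - y) * \<bar>v s y\<bar>) \<partial>lborel) \<partial>lborel)
          \<le> (\<integral>\<^sup>+s. indicator {t0..<t} s * (ennreal (a s) * b s) \<partial>lborel)"
      proof (rule nn_integral_mono)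
        fix s
        show "indicator {t0..<t} s * (\<integral>\<^sup>+y. indicator Q y * ennreal (\<kappa> s (x - y) * \<bar>v s y\<bar>) \<partial>lborel)
            \<le> indicator {t0..<t} s * (ennreal (a s) * b s)"
          using inner[of s x] by (cases "t0 \<le> s \<and> s < t") auto
      qed
    qed
    then show "Lp_norm (restrict_space lborel Q) top (\<lambda>x. \<integral>\<^sup>+s. indicator {t0..<t} s * (\<integral>\<^sup>+y. indicator Q y *
        ennreal ((C * (t - s) powr (- \<alpha>) * exp (- c * norm (x - y) powr \<beta> / (t - s) powr \<gamma>)) * \<bar>v s y\<bar>) \<partial>lborel) \<partial>lborel)
     \<le> (\<integral>\<^sup>+s. indicator {t0..<t} s * (ennreal (K' * (t - s) powr (- \<alpha> + \<gamma> * real DIM('a) / \<beta>)) * Lp_norm (restrict_space lborel Q) top (\<lambda>y. ennreal \<bar>v s y\<bar>)) \<partial>lborel)"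
      unfolding \<kappa>_def a_def b_def .
  qed
qed

lemma caseB:
  fixes Q :: "'a::euclidean_space set" and \<alpha> :: real
  assumes Qm[measurable]: "Q \<in> sets borel" and C: "0 < C" and c: "0 < c"
  shows "\<exists>K'>0. \<forall>v. case_prod v \<in> borel_measurable (borel \<Otimes>\<^sub>M borel) \<longrightarrow> (\<forall>t0 t.
     Lp_norm (restrict_space lborel Q) top (\<lambda>x. \<integral>\<^sup>+s. indicator {t0..<t} s * (\<integral>\<^sup>+y. indicator Q y *
        ennreal ((C * (t - s) powr (- \<alpha>) * exp (- c * norm (x - y) powr \<beta> / (t - s) powr \<gamma>)) * \<bar>v s y\<bar>) \<partial>lborel) \<partial>lborel)
     \<le> (\<integral>\<^sup>+s. indicator {t0..<t} s * (ennreal (K' * (t - s) powr (- \<alpha>)) * Lp_norm (restrict_space lborel Q) 1 (\<lambda>y. ennreal \<bar>v s y\<bar>)) \<partial>lborel))"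
proof (intro exI[of _ C] conjI allI impI C)
  fix v :: "real \<Rightarrow> 'a \<Rightarrow> real" and t0 t :: real
  assume vm[measurable]: "case_prod v \<in> borel_measurable (borel \<Otimes>\<^sub>M borel)"
  have b1: "Lp_norm (restrict_space lborel Q) 1 (\<lambda>y. ennreal \<bar>v s y\<bar>) = (\<integral>\<^sup>+y. ennreal \<bar>v s y\<bar> * indicator Q y \<partial>lborel)" for s
    by (simp add: Lp_norm_def nn_integral_restrict_space)
  show "Lp_norm (restrict_space lborel Q) top (\<lambda>x. \<integral>\<^sup>+s. indicator {t0..<t} s * (\<integral>\<^sup>+y. indicator Q y *
        ennreal ((C * (t - s) powr (- \<alpha>) * exp (- c * norm (x - y) powr \<beta> / (t - s) powr \<gamma>)) * \<bar>v s y\<bar>) \<partial>lborel) \<partial>lborel)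
     \<le> (\<integral>\<^sup>+s. indicator {t0..<t} s * (ennreal (C * (t - s) powr (- \<alpha>)) * Lp_norm (restrict_space lborel Q) 1 (\<lambda>y. ennreal \<bar>v s y\<bar>)) \<partial>lborel)"
  proof (rule Lp_norm_top_le, rule AE_I2, rule nn_integral_mono)
    fix x s
    show "indicator {t0..<t} s * (\<integral>\<^sup>+y. indicator Q y *
        ennreal ((C * (t - s) powr (- \<alpha>) * exp (- c * norm (x - y) powr \<beta> / (t - s) powr \<gamma>)) * \<bar>v s y\<bar>) \<partial>lborel)
      \<le> indicator {t0..<t} s * (ennreal (C * (t - s) powr (- \<alpha>)) * Lp_norm (restrict_space lborel Q) 1 (\<lambda>y. ennreal \<bar>v s y\<bar>))"
    proof (cases "t0 \<le> s \<and> s < t")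
      case True
      have "(\<integral>\<^sup>+y. indicator Q y * ennreal ((C * (t - s) powr (- \<alpha>) * exp (- c * norm (x - y) powr \<beta> / (t - s) powr \<gamma>)) * \<bar>v s y\<bar>) \<partial>lborel)
          \<le> (\<integral>\<^sup>+y. ennreal (C * (t - s) powr (- \<alpha>)) * (ennreal \<bar>v s y\<bar> * indicator Q y) \<partial>lborel)"
      proof (rule nn_integral_mono)
        fix y
        have e1: "exp (- c * norm (x - y) powr \<beta> / (t - s) powr \<gamma>) \<le> 1"
          using True c by (simp add: divide_nonneg_nonneg)
        have rle: "C * (t - s) powr (- \<alpha>) * exp (- c * norm (x - y) powr \<beta> / (t - s) powr \<gamma>) * \<bar>v s y\<bar>
            \<le> C * (t - s) powr (- \<alpha>) * \<bar>v s y\<bar>"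
          using e1 C by (intro mult_right_mono) (auto intro: mult_left_le)
        then have "ennreal (C * (t - s) powr (- \<alpha>) * exp (- c * norm (x - y) powr \<beta> / (t - s) powr \<gamma>) * \<bar>v s y\<bar>)
            \<le> ennreal (C * (t - s) powr (- \<alpha>)) * ennreal \<bar>v s y\<bar>"
        proof -
          note ennreal_leI[OF rle]
          also have "ennreal (C * (t - s) powr (- \<alpha>) * \<bar>v s y\<bar>) = ennreal (C * (t - s) powr (- \<alpha>)) * ennreal \<bar>v s y\<bar>"
            using C by (intro ennreal_mult) auto
          finally show ?thesis .
        qed
        then show "indicator Q y * ennreal ((C * (t - s) powr (- \<alpha>) * exp (- c * norm (x - y) powr \<beta> / (t - s) powr \<gamma>)) * \<bar>v s y\<bar>)
            \<le> ennreal (C * (t - s) powr (- \<alpha>)) * (ennreal \<bar>v s y\<bar> * indicator Q y)"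
          by (auto simp: indicator_def)
      qed
      also have "\<dots> = ennreal (C * (t - s) powr (- \<alpha>)) * Lp_norm (restrict_space lborel Q) 1 (\<lambda>y. ennreal \<bar>v s y\<bar>)"
        unfolding b1 by (rule nn_integral_cmult) measurable
      finally show ?thesis using True by simp
    qed simp
  qed
qed

lemma powr_int:
  fixes e t :: real assumes e: "-1 < e" and t: "0 \<le> t"
  shows "(\<integral>\<^sup>+s. ennreal ((t - s) powr e) * indicator {0..t} s \<partial>lborel) = ennreal (t powr (e + 1) / (e + 1))"
proof -
  define f where "f x = ennreal (indicator {0..t} x * x powr e)" for x :: real
  have fm: "f \<in> borel_measurable borel" unfolding f_def by measurable
  have "(\<integral>\<^sup>+x. f x \<partial>lborel) = ennreal (t powr (e + 1) / (e + 1))"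
    unfolding f_def by (rule nn_integral_has_integral_lebesgue) (use has_integral_powr_from_0[OF e t] in auto)
  moreover have "(\<integral>\<^sup>+x. f x \<partial>lborel) = ennreal \<bar>- 1\<bar> * (\<integral>\<^sup>+x. f (t + (- 1) * x) \<partial>lborel)"
    by (rule nn_integral_real_affine[OF fm]) simp
  moreover have "(\<integral>\<^sup>+x. f (t + (- 1) * x) \<partial>lborel) = (\<integral>\<^sup>+s. ennreal ((t - s) powr e) * indicator {0..t} s \<partial>lborel)"
    by (intro nn_integral_cong) (auto simp: f_def indicator_def)
  ultimately show ?thesis by simp
qed

lemma rhs_conv:
  assumes bm: "b \<in> borel_measurable borel" and K: "0 \<le> K"
  shows "(\<integral>\<^sup>+s. indicator {t0..<t} s * (ennreal (K * (t - s) powr e) * b s) \<partial>lborel)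
       = ennreal K * (\<integral>\<^sup>+s \<in> {t0..t}. ennreal ((t - s) powr e) * b s \<partial>lborel)"
proof -
  have "(\<integral>\<^sup>+s. indicator {t0..<t} s * (ennreal (K * (t - s) powr e) * b s) \<partial>lborel)
      = (\<integral>\<^sup>+s. ennreal K * (ennreal ((t - s) powr e) * b s * indicator {t0..t} s) \<partial>lborel)"
  proof (rule nn_integral_cong)
    fix s :: real
    show "indicator {t0..<t} s * (ennreal (K * (t - s) powr e) * b s) = ennreal K * (ennreal ((t - s) powr e) * b s * indicator {t0..t} s)"
    proof (cases "s = t")
      case False
      then show ?thesis using K by (auto simp: indicator_def ennreal_mult mult.assoc)
    qed simp
  qed
  also have "\<dots> = ennreal K * (\<integral>\<^sup>+s \<in> {t0..t}. ennreal ((t - s) powr e) * b s \<partial>lborel)"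
  proof -
    have im[measurable]: "(indicator {t0..t} :: real \<Rightarrow> ennreal) \<in> borel_measurable lborel"
      by (rule borel_measurable_indicator) simp
    have bm'[measurable]: "b \<in> borel_measurable lborel" using bm by simp
    show ?thesis by (intro nn_integral_cmult) measurable
  qed
  finally show ?thesis .
qed


lemma time_holder:
  fixes e T :: real and lam :: ennreal
  assumes T: "0 < T" and lam: "1 \<le> lam" and e: "recip lam - 1 < e"
  shows "\<exists>K2>0. \<forall>b. b \<in> borel_measurable borel \<longrightarrow> (\<forall>t. 0 \<le> t \<and> t \<le> T \<longrightarrow>
     (\<integral>\<^sup>+s \<in> {0..t}. ennreal ((t - s) powr e) * b s \<partial>lborel) \<le> ennreal K2 * Lp_norm (restrict_space lborel {0..T}) lam b)"
proof (cases "lam = top")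
  case True
  then have e1: "-1 < e" using e by simp
  define K2 where "K2 = T powr (e + 1) / (e + 1)"
  have K2: "0 < K2" using T e1 by (simp add: K2_def)
  show ?thesis
  proof (intro exI[of _ K2] conjI allI impI K2)
    fix b :: "real \<Rightarrow> ennreal" and t :: real
    assume bm[measurable]: "b \<in> borel_measurable borel" and t: "0 \<le> t \<and> t \<le> T"
    define L where "L = Lp_norm (restrict_space lborel {0..T}) lam b"
    have "AE s in restrict_space lborel {0..T}. b s \<le> L"
      unfolding L_def True by (rule AE_le_Lp_norm_top)
    then have AEb: "AE s in lborel. s \<in> {0..T} \<longrightarrow> b s \<le> L"
      by (subst (asm) AE_restrict_space_iff) auto
    have "(\<integral>\<^sup>+s \<in> {0..t}. ennreal ((t - s) powr e) * b s \<partial>lborel)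
        \<le> (\<integral>\<^sup>+s. (ennreal ((t - s) powr e) * indicator {0..t} s) * L \<partial>lborel)"
      using AEb
    proof (intro nn_integral_mono_AE, eventually_elim)
      case (elim s)
      show ?case
      proof (cases "s \<in> {0..t}")
        case True
        then have "b s \<le> L" using elim t by auto
        then show ?thesis using True by (simp add: mult_left_mono)
      qed simp
    qed
    also have "\<dots> = (\<integral>\<^sup>+s. ennreal ((t - s) powr e) * indicator {0..t} s \<partial>lborel) * L"
    proof -
      have im[measurable]: "(indicator {0..t} :: real \<Rightarrow> ennreal) \<in> borel_measurable lborel"
        by (rule borel_measurable_indicator) simp
      show ?thesis by (intro nn_integral_multc) measurable
    qed
    also have "\<dots> = ennreal (t powr (e + 1) / (e + 1)) * L"
      using powr_int[OF e1, of t] t by simp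
    also have "\<dots> \<le> ennreal K2 * L"
    proof (rule mult_right_mono)
      have "t powr (e + 1) \<le> T powr (e + 1)" using t e1 by (intro powr_mono2) auto
      then show "ennreal (t powr (e + 1) / (e + 1)) \<le> ennreal K2"
        unfolding K2_def using e1 by (intro ennreal_leI divide_right_mono) auto
    qed simp
    finally show "(\<integral>\<^sup>+s \<in> {0..t}. ennreal ((t - s) powr e) * b s \<partial>lborel) \<le> ennreal K2 * Lp_norm (restrict_space lborel {0..T}) lam b"
      unfolding L_def .
  qed
next
  case False
  then obtain l where l: "lam = ennreal l" "0 \<le> l" by (cases lam) auto
  have l1: "1 \<le> l" using lam l by simp
  have rl: "recip lam = 1 / l" using l l1 by (simp add: recip_ennreal)
  have Lp_eq: "Lp_norm (restrict_space lborel {0..T}) lam b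
      = enn_powr (\<integral>\<^sup>+s. enn_powr (b s) l * indicator {0..T} s \<partial>lborel) (1 / l)" for b
    using l by (simp add: Lp_norm_def nn_integral_restrict_space)
  show ?thesis
  proof (cases "l = 1")
    case True
    then have e0: "0 < e" using e rl by simp
    define K2 where "K2 = T powr e"
    have K2: "0 < K2" using T by (simp add: K2_def)
    show ?thesis
    proof (intro exI[of _ K2] conjI allI impI K2)
      fix b :: "real \<Rightarrow> ennreal" and t :: real
      assume bm[measurable]: "b \<in> borel_measurable borel" and t: "0 \<le> t \<and> t \<le> T"
      have im[measurable]: "(indicator {0..T} :: real \<Rightarrow> ennreal) \<in> borel_measurable lborel"
        by (rule borel_measurable_indicator) simp
      have "(\<integral>\<^sup>+s \<in> {0..t}. ennreal ((t - s) powr e) * b s \<partial>lborel)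
          \<le> (\<integral>\<^sup>+s. ennreal K2 * (b s * indicator {0..T} s) \<partial>lborel)"
      proof (rule nn_integral_mono)
        fix s
        show "ennreal ((t - s) powr e) * b s * indicator {0..t} s \<le> ennreal K2 * (b s * indicator {0..T} s)"
        proof (cases "s \<in> {0..t}")
          case True
          have "(t - s) powr e \<le> T powr e" using True t e0 by (intro powr_mono2) auto
          then have "ennreal ((t - s) powr e) \<le> ennreal K2" unfolding K2_def by (rule ennreal_leI)
          then show ?thesis using True t by (auto intro: mult_right_mono)
        qed simp
      qed
      also have "\<dots> = ennreal K2 * (\<integral>\<^sup>+s. b s * indicator {0..T} s \<partial>lborel)"
        by (intro nn_integral_cmult) measurable
      also have "(\<integral>\<^sup>+s. b s * indicator {0..T} s \<partial>lborel) = Lp_norm (restrict_space lborel {0..T}) lam b"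
        unfolding Lp_eq using True by simp
      finally show "(\<integral>\<^sup>+s \<in> {0..t}. ennreal ((t - s) powr e) * b s \<partial>lborel) \<le> ennreal K2 * Lp_norm (restrict_space lborel {0..T}) lam b" .
    qed
  next
    case False
    then have l1': "1 < l" using l1 by simp
    define \<theta> where "\<theta> = 1 / l"
    have \<theta>: "0 < \<theta>" "\<theta> < 1" using l1' by (auto simp: \<theta>_def)
    define e' where "e' = e / (1 - \<theta>)"
    have e'1: "-1 < e'" using e \<theta> rl by (simp add: e'_def \<theta>_def field_simps)
    have e'e: "e' * (1 - \<theta>) = e" using \<theta> by (simp add: e'_def)
    define K2 where "K2 = (T powr (e' + 1) / (e' + 1)) powr (1 - \<theta>)"
    have K2: "0 < K2" using T e'1 by (simp add: K2_def)
    show ?thesis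
    proof (intro exI[of _ K2] conjI allI impI K2)
      fix b :: "real \<Rightarrow> ennreal" and t :: real
      assume bm[measurable]: "b \<in> borel_measurable borel" and t: "0 \<le> t \<and> t \<le> T"
      have im[measurable]: "(indicator {0..T} :: real \<Rightarrow> ennreal) \<in> borel_measurable lborel"
        by (rule borel_measurable_indicator) simp
      have im2[measurable]: "(indicator {0..t} :: real \<Rightarrow> ennreal) \<in> borel_measurable lborel"
        by (rule borel_measurable_indicator) simp
      have "(\<integral>\<^sup>+s \<in> {0..t}. ennreal ((t - s) powr e) * b s \<partial>lborel)
          \<le> (\<integral>\<^sup>+s. enn_powr (enn_powr (b s) l * indicator {0..T} s) \<theta>
               * enn_powr (ennreal ((t - s) powr e') * indicator {0..t} s) (1 - \<theta>) \<partial>lborel)"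
      proof (rule nn_integral_mono)
        fix s
        show "ennreal ((t - s) powr e) * b s * indicator {0..t} s
           \<le> enn_powr (enn_powr (b s) l * indicator {0..T} s) \<theta> * enn_powr (ennreal ((t - s) powr e') * indicator {0..t} s) (1 - \<theta>)"
        proof (cases "s \<in> {0..t}")
          case True
          then have sT: "s \<in> {0..T}" using t by auto
          have "enn_powr (enn_powr (b s) l * indicator {0..T} s) \<theta> = b s"
            using sT l1 \<theta> by (simp add: enn_powr_powr \<theta>_def)
          moreover have "enn_powr (ennreal ((t - s) powr e') * indicator {0..t} s) (1 - \<theta>) = ennreal ((t - s) powr e)"
            using True by (simp add: enn_powr_ennreal powr_powr e'e)
          ultimately show ?thesis using True by (simp add: mult.commute)
        qed simp
      qed
      also have "\<dots> \<le> enn_powr (\<integral>\<^sup>+s. enn_powr (b s) l * indicator {0..T} s \<partial>lborel) \<theta>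
          * enn_powr (\<integral>\<^sup>+s. ennreal ((t - s) powr e') * indicator {0..t} s \<partial>lborel) (1 - \<theta>)"
        by (rule holder2) (use \<theta> in auto)
      also have "\<dots> \<le> enn_powr (\<integral>\<^sup>+s. enn_powr (b s) l * indicator {0..T} s \<partial>lborel) \<theta> * ennreal K2"
      proof (rule mult_left_mono)
        have "(\<integral>\<^sup>+s. ennreal ((t - s) powr e') * indicator {0..t} s \<partial>lborel) = ennreal (t powr (e' + 1) / (e' + 1))"
          using powr_int[OF e'1, of t] t by simp
        also have "\<dots> \<le> ennreal (T powr (e' + 1) / (e' + 1))"
        proof -
          have "t powr (e' + 1) \<le> T powr (e' + 1)" using t e'1 by (intro powr_mono2) auto
          then show ?thesis using e'1 by (intro ennreal_leI divide_right_mono) auto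
        qed
        finally have "enn_powr (\<integral>\<^sup>+s. ennreal ((t - s) powr e') * indicator {0..t} s \<partial>lborel) (1 - \<theta>)
           \<le> enn_powr (ennreal (T powr (e' + 1) / (e' + 1))) (1 - \<theta>)"
          using \<theta> by (intro enn_powr_mono) auto
        also have "\<dots> = ennreal K2" unfolding K2_def using T e'1 by (simp add: enn_powr_ennreal)
        finally show "enn_powr (\<integral>\<^sup>+s. ennreal ((t - s) powr e') * indicator {0..t} s \<partial>lborel) (1 - \<theta>) \<le> ennreal K2" .
      qed simp
      finally show "(\<integral>\<^sup>+s \<in> {0..t}. ennreal ((t - s) powr e) * b s \<partial>lborel) \<le> ennreal K2 * Lp_norm (restrict_space lborel {0..T}) lam b"
        by (simp add: Lp_eq \<theta>_def mult.commute)
    qed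
  qed
qed

theorem lemma3p1:
  fixes Q :: "'a::euclidean_space set"
    and H :: "real \<Rightarrow> 'a \<Rightarrow> real \<Rightarrow> 'a \<Rightarrow> real"
    and T \<alpha> \<beta> \<gamma> c C :: real
    and \<rho> q :: ennreal
  assumes "compact Q"
    and "T > 0"
    and "\<beta> \<ge> 1" and "\<alpha> > 0" and "\<gamma> > 0" and "c > 0" and "C > 0"
    and H_meas: "(\<lambda>((t, x), (s, y)). H t x s y) \<in> borel_measurable borel"
    and H_bound: "\<And>s t x y. 0 \<le> s \<Longrightarrow> s < t \<Longrightarrow> t \<le> T \<Longrightarrow> x \<in> Q \<Longrightarrow> y \<in> Q \<Longrightarrow>
          \<bar>H t x s y\<bar> \<le> C * (t - s) powr (- \<alpha>) * exp (- c * norm (x - y) powr \<beta> / (t - s) powr \<gamma>)"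
    and "1 \<le> \<rho>" and "\<rho> \<le> q"
  defines "rinv \<equiv> recip q - recip \<rho> + 1"
  shows
    "(\<exists>K>0. \<forall>v :: real \<Rightarrow> 'a \<Rightarrow> real. (\<lambda>(s, y). v s y) \<in> borel_measurable borel \<longrightarrow>
        (\<forall>t0 t. 0 \<le> t0 \<and> t0 \<le> t \<and> t \<le> T \<longrightarrow>
          Lp_norm (restrict_space lborel Q) q (\<lambda>x. ennreal \<bar>Jop Q H v t0 t x\<bar>)
          \<le> ennreal K * (\<integral>\<^sup>+ s \<in> {t0..t}.
                ennreal ((t - s) powr (- \<alpha> + \<gamma> * real DIM('a) * rinv / \<beta>))
                * Lp_norm (restrict_space lborel Q) \<rho> (\<lambda>y. ennreal \<bar>v s y\<bar>) \<partial>lborel)))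
     \<and> (\<forall>lam::ennreal. 1 \<le> lam \<longrightarrow> \<alpha> + recip lam < \<gamma> * real DIM('a) * rinv / \<beta> + 1 \<longrightarrow>
        (\<exists>K>0. \<forall>v :: real \<Rightarrow> 'a \<Rightarrow> real. (\<lambda>(s, y). v s y) \<in> borel_measurable borel \<longrightarrow>
          Lp_norm (restrict_space lborel {0..T}) \<infinity>
              (\<lambda>t. Lp_norm (restrict_space lborel Q) q (\<lambda>x. ennreal \<bar>Jop Q H v 0 t x\<bar>))
          \<le> ennreal K * Lp_norm (restrict_space lborel {0..T}) lam
              (\<lambda>s. Lp_norm (restrict_space lborel Q) \<rho> (\<lambda>y. ennreal \<bar>v s y\<bar>))))"
proof -
  have Qm[measurable]: "Q \<in> sets borel" using assms(1) by (simp add: compact_imp_closed borel_closed)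
  have \<rho>1: "1 \<le> \<rho>" and \<rho>q: "\<rho> \<le> q" using assms by auto
  have q1: "1 \<le> q" using \<rho>1 \<rho>q by (rule order.trans)
  have itop: "(\<infinity>::ennreal) = top" by simp
  define e where "e = - \<alpha> + \<gamma> * real DIM('a) * rinv / \<beta>"
  have key: "\<exists>K'>0. \<forall>v. case_prod v \<in> borel_measurable (borel \<Otimes>\<^sub>M borel) \<longrightarrow> (\<forall>t0 t.
     Lp_norm (restrict_space lborel Q) q (\<lambda>x. \<integral>\<^sup>+s. indicator {t0..<t} s * (\<integral>\<^sup>+y. indicator Q y *
        ennreal ((C * (t - s) powr (- \<alpha>) * exp (- c * norm (x - y) powr \<beta> / (t - s) powr \<gamma>)) * \<bar>v s y\<bar>) \<partial>lborel) \<partial>lborel)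
     \<le> (\<integral>\<^sup>+s. indicator {t0..<t} s * (ennreal (K' * (t - s) powr e) * Lp_norm (restrict_space lborel Q) \<rho> (\<lambda>y. ennreal \<bar>v s y\<bar>)) \<partial>lborel))"
  proof (cases "\<rho> = top")
    case True
    then have qt: "q = top" using \<rho>q by (simp add: top_unique)
    have "rinv = 1" using True qt by (simp add: rinv_def)
    then have ee: "e = - \<alpha> + \<gamma> * real DIM('a) / \<beta>" by (simp add: e_def)
    show ?thesis unfolding ee True qt
      by (rule caseA) (use Qm assms in auto)
  next
    case False
    then obtain p where p: "\<rho> = ennreal p" "0 \<le> p" by (cases \<rho>) auto
    have p1: "1 \<le> p" using \<rho>1 p by simp
    have rp: "recip \<rho> = 1 / p" using p p1 by (simp add: recip_ennreal)
    have rinv_eq: "rinv = recip q - 1 / p + 1" by (simp add: rinv_def rp)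
    have rq0: "0 \<le> recip q" by (rule recip_ge0)
    have pinv: "1 / p \<le> 1" using p1 by simp
    show ?thesis
    proof (cases "rinv = 0")
      case True
      then have "recip q = 0" "1 / p = 1" using rinv_eq rq0 pinv by linarith+
      then have qt: "q = top" and p1': "p = 1" using recip_zero_imp[OF q1] by auto
      have ee: "e = - \<alpha>" using True by (simp add: e_def)
      show ?thesis unfolding ee qt p(1) p1'
        using caseB[OF Qm assms(7) assms(6), of \<alpha> \<beta> \<gamma>] by simp
    next
      case False
      then have rpos: "0 < recip q - 1 / p + 1" using rinv_eq rq0 pinv by linarith
      have ee: "e = - \<alpha> + \<gamma> * real DIM('a) * (recip q - 1 / p + 1) / \<beta>" by (simp add: e_def rinv_eq)
      have qp: "ennreal p \<le> q" using \<rho>q p by simp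
      show ?thesis unfolding ee p(1)
        by (rule caseC[OF Qm assms(7) assms(6) assms(3) assms(5) p1 qp rpos])
    qed
  qed
  then obtain K' where K': "0 < K'" and KP: "\<And>v t0 t. case_prod v \<in> borel_measurable (borel \<Otimes>\<^sub>M borel) \<Longrightarrow>
     Lp_norm (restrict_space lborel Q) q (\<lambda>x. \<integral>\<^sup>+s. indicator {t0..<t} s * (\<integral>\<^sup>+y. indicator Q y *
        ennreal ((C * (t - s) powr (- \<alpha>) * exp (- c * norm (x - y) powr \<beta> / (t - s) powr \<gamma>)) * \<bar>v s y\<bar>) \<partial>lborel) \<partial>lborel)
     \<le> (\<integral>\<^sup>+s. indicator {t0..<t} s * (ennreal (K' * (t - s) powr e) * Lp_norm (restrict_space lborel Q) \<rho> (\<lambda>y. ennreal \<bar>v s y\<bar>)) \<partial>lborel)"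
    by blast
  have part1: "Lp_norm (restrict_space lborel Q) q (\<lambda>x. ennreal \<bar>Jop Q H v t0 t x\<bar>)
          \<le> ennreal K' * (\<integral>\<^sup>+ s \<in> {t0..t}. ennreal ((t - s) powr e)
                * Lp_norm (restrict_space lborel Q) \<rho> (\<lambda>y. ennreal \<bar>v s y\<bar>) \<partial>lborel)"
    if vm: "(\<lambda>(s, y). v s y) \<in> borel_measurable borel" and tt: "0 \<le> t0" "t0 \<le> t" "t \<le> T" for v :: "real \<Rightarrow> 'a \<Rightarrow> real" and t0 t
  proof -
    have vm'[measurable]: "case_prod v \<in> borel_measurable (borel \<Otimes>\<^sub>M borel)" using vm by (simp only: borel_prod)
    have bm: "(\<lambda>s. Lp_norm (restrict_space lborel Q) \<rho> (\<lambda>y. ennreal \<bar>v s y\<bar>)) \<in> borel_measurable borel"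
      by (rule Lp_meas[OF Qm vm' \<rho>1])
    have "Lp_norm (restrict_space lborel Q) q (\<lambda>x. ennreal \<bar>Jop Q H v t0 t x\<bar>)
       \<le> Lp_norm (restrict_space lborel Q) q (\<lambda>x. \<integral>\<^sup>+s. indicator {t0..<t} s * (\<integral>\<^sup>+y. indicator Q y *
        ennreal ((C * (t - s) powr (- \<alpha>) * exp (- c * norm (x - y) powr \<beta> / (t - s) powr \<gamma>)) * \<bar>v s y\<bar>) \<partial>lborel) \<partial>lborel)"
    proof (rule Lp_norm_mono[OF _ q1])
      fix x assume "x \<in> space (restrict_space lborel Q)"
      then have xQ: "x \<in> Q" by simp
      show "ennreal \<bar>Jop Q H v t0 t x\<bar> \<le> (\<integral>\<^sup>+s. indicator {t0..<t} s * (\<integral>\<^sup>+y. indicator Q y *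
        ennreal ((C * (t - s) powr (- \<alpha>) * exp (- c * norm (x - y) powr \<beta> / (t - s) powr \<gamma>)) * \<bar>v s y\<bar>) \<partial>lborel) \<partial>lborel)"
      proof (rule J_le[where \<kappa>="\<lambda>s z. C * (t - s) powr (- \<alpha>) * exp (- c * norm z powr \<beta> / (t - s) powr \<gamma>)"])
        fix s y assume "t0 \<le> s" "s < t" "y \<in> Q"
        then show "\<bar>H t x s y\<bar> \<le> C * (t - s) powr (- \<alpha>) * exp (- c * norm (x - y) powr \<beta> / (t - s) powr \<gamma>)"
          using H_bound[of s t x y] xQ tt by auto
      qed
    qed
    also have "\<dots> \<le> (\<integral>\<^sup>+s. indicator {t0..<t} s * (ennreal (K' * (t - s) powr e) * Lp_norm (restrict_space lborel Q) \<rho> (\<lambda>y. ennreal \<bar>v s y\<bar>)) \<partial>lborel)"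
      by (rule KP[OF vm'])
    also have "\<dots> = ennreal K' * (\<integral>\<^sup>+ s \<in> {t0..t}. ennreal ((t - s) powr e)
                * Lp_norm (restrict_space lborel Q) \<rho> (\<lambda>y. ennreal \<bar>v s y\<bar>) \<partial>lborel)"
      by (rule rhs_conv[OF bm]) (use K' in simp)
    finally show ?thesis .
  qed
  show ?thesis
  proof (intro conjI allI impI)
    show "\<exists>K>0. \<forall>v :: real \<Rightarrow> 'a \<Rightarrow> real. (\<lambda>(s, y). v s y) \<in> borel_measurable borel \<longrightarrow>
        (\<forall>t0 t. 0 \<le> t0 \<and> t0 \<le> t \<and> t \<le> T \<longrightarrow>
          Lp_norm (restrict_space lborel Q) q (\<lambda>x. ennreal \<bar>Jop Q H v t0 t x\<bar>)
          \<le> ennreal K * (\<integral>\<^sup>+ s \<in> {t0..t}.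
                ennreal ((t - s) powr (- \<alpha> + \<gamma> * real DIM('a) * rinv / \<beta>))
                * Lp_norm (restrict_space lborel Q) \<rho> (\<lambda>y. ennreal \<bar>v s y\<bar>) \<partial>lborel))"
      using part1 K' unfolding e_def by blast
  next
    fix lam :: ennreal
    assume lam: "1 \<le> lam" and cond: "\<alpha> + recip lam < \<gamma> * real DIM('a) * rinv / \<beta> + 1"
    have econd: "recip lam - 1 < e" using cond by (simp add: e_def)
    obtain K2 where K2: "0 < K2" and K2P: "\<And>b t. b \<in> borel_measurable borel \<Longrightarrow> 0 \<le> t \<Longrightarrow> t \<le> T \<Longrightarrow>
       (\<integral>\<^sup>+s \<in> {0..t}. ennreal ((t - s) powr e) * b s \<partial>lborel) \<le> ennreal K2 * Lp_norm (restrict_space lborel {0..T}) lam b"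
      using time_holder[OF assms(2) lam econd] by blast
    show "\<exists>K>0. \<forall>v :: real \<Rightarrow> 'a \<Rightarrow> real. (\<lambda>(s, y). v s y) \<in> borel_measurable borel \<longrightarrow>
          Lp_norm (restrict_space lborel {0..T}) \<infinity>
              (\<lambda>t. Lp_norm (restrict_space lborel Q) q (\<lambda>x. ennreal \<bar>Jop Q H v 0 t x\<bar>))
          \<le> ennreal K * Lp_norm (restrict_space lborel {0..T}) lam
              (\<lambda>s. Lp_norm (restrict_space lborel Q) \<rho> (\<lambda>y. ennreal \<bar>v s y\<bar>))"
    proof (intro exI[of _ "K' * K2"] conjI allI impI)
      show "0 < K' * K2" using K' K2 by simp
      fix v :: "real \<Rightarrow> 'a \<Rightarrow> real"
      assume vm: "(\<lambda>(s, y). v s y) \<in> borel_measurable borel"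
      have vm'[measurable]: "case_prod v \<in> borel_measurable (borel \<Otimes>\<^sub>M borel)" using vm by (simp only: borel_prod)
      have bm: "(\<lambda>s. Lp_norm (restrict_space lborel Q) \<rho> (\<lambda>y. ennreal \<bar>v s y\<bar>)) \<in> borel_measurable borel"
        by (rule Lp_meas[OF Qm vm' \<rho>1])
      show "Lp_norm (restrict_space lborel {0..T}) \<infinity>
              (\<lambda>t. Lp_norm (restrict_space lborel Q) q (\<lambda>x. ennreal \<bar>Jop Q H v 0 t x\<bar>))
          \<le> ennreal (K' * K2) * Lp_norm (restrict_space lborel {0..T}) lam
              (\<lambda>s. Lp_norm (restrict_space lborel Q) \<rho> (\<lambda>y. ennreal \<bar>v s y\<bar>))"
      proof (subst itop, rule Lp_norm_top_le, rule AE_I2)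
        fix t assume "t \<in> space (restrict_space lborel {0..T})"
        then have t: "0 \<le> t" "t \<le> T" by auto
        have "Lp_norm (restrict_space lborel Q) q (\<lambda>x. ennreal \<bar>Jop Q H v 0 t x\<bar>)
           \<le> ennreal K' * (\<integral>\<^sup>+ s \<in> {0..t}. ennreal ((t - s) powr e)
                * Lp_norm (restrict_space lborel Q) \<rho> (\<lambda>y. ennreal \<bar>v s y\<bar>) \<partial>lborel)"
          using part1[OF vm _ t(1) t(2)] by simp
        also have "\<dots> \<le> ennreal K' * (ennreal K2 * Lp_norm (restrict_space lborel {0..T}) lam
              (\<lambda>s. Lp_norm (restrict_space lborel Q) \<rho> (\<lambda>y. ennreal \<bar>v s y\<bar>)))"
          by (intro mult_left_mono K2P[OF bm t]) simp
        also have "\<dots> = ennreal (K' * K2) * Lp_norm (restrict_space lborel {0..T}) lam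
              (\<lambda>s. Lp_norm (restrict_space lborel Q) \<rho> (\<lambda>y. ennreal \<bar>v s y\<bar>))"
          using K' K2 by (simp add: ennreal_mult mult.assoc)
        finally show "Lp_norm (restrict_space lborel Q) q (\<lambda>x. ennreal \<bar>Jop Q H v 0 t x\<bar>)
          \<le> ennreal (K' * K2) * Lp_norm (restrict_space lborel {0..T}) lam
              (\<lambda>s. Lp_norm (restrict_space lborel Q) \<rho> (\<lambda>y. ennreal \<bar>v s y\<bar>))" .
      qed
    qed
  qed
qed

end
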